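(* Consider the online resource allocation model with samples described in the context, with a capacity of $m_t$ units during the test period and $m$ units during the allocation period, and the modified Algorithm described in the context. If $m_t=\omega(\sqrt m)$, then the worst-case competitive ratio of the modified Algorithm scales as $1-\Theta\big(1/(p\sqrt m)\big)$ as $m\to\infty$.
   Context: Model: an accepted type-$i$ agent ($i\in\{1,2\}$) yields a reward in $\{0,1\}$ with mean $r_i\in(0,1)$, $r_1>r_2$, unknown to the decision-maker. An adversary chooses integers $h,\ell\ge0$. Each of the $h+\ell$ agents is independently sampled with known probability $p\in(0,1)$; $s_1\sim\mathrm{Bin}(h,p)$, $s_2\sim\mathrm{Bin}(\ell,p)$ are known to the decision-maker. Test-period capacity $m_t$: if $s_1+s_2\le m_t$ all sampled agents receive a unit; if $s_1+s_2>m_t$ and $s_1,s_2>m_t/2$, $m_t/2$ agents of each type receive a unit; if $s_1+s_2>m_t$ and exactly one of $s_1,s_2$ exceeds $m_t/2$, all sampled agents of the type with fewer samples and the rest (up to a total of $m_t$) of the other type receive a unit. Agents receiving a unit reveal realized rewards ($\mathrm{Ber}(r_i)$ i.i.d.); leftover test units do not carry over. Allocation period: the remaining $n_1=h-s_1$, $n_2=\ell-s_2$ agents arrive online in an adversarial order $I$; each is irrevocably accepted (possibly fractionally) or rejected, total allocation at most $m$. $\mathrm{OPT}(I)=r_1\min\{n_1,m\}+r_2\min\{n_2,(m-n_1)^+\}$; competitive ratio $\inf_{(h,\ell)}\mathbb E[\inf_I\mathbb E[\mathrm{REW}_A]/\mathrm{OPT}(I)]$, outer expectation over the sampling and revealed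 rewards. Protection level policy for type $i$ with level $x$: accept type $i$ agents while resource remains; accept type $-i$ agents only while fewer than $m-x$ type $-i$ agents have been accepted and resource remains. Modified Algorithm: for $i\in\{1,2\}$, let $\hat r_i$ be the average realized reward of the type-$i$ agents that received a unit in the test period (if none, $\hat r_i\sim\mathrm{Uniform}(0,1)$). If $\hat r_1>\hat r_2$ use the protection level policy for type 1 with level $\min\{m,s_1\frac{1-p}{p}\}$, otherwise for type 2 with level $\min\{m,s_2\frac{1-p}{p}\}$. *)

theory Defs
  imports "HOL-Probability.Probability" "HOL-Library.Landau_Symbols"
begin

text \<open>Agent types are encoded as booleans: True = type 1 (mean reward r1),
  False = type 2 (mean reward r2).\<close>

text \<open>Test-period allocation: given capacity mt and the sample counts s1, s2,
  returns the numbers (t1, t2) of sampled type-1 / type-2 agents receiving a unit.\<close>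
definition test_alloc :: "nat \<Rightarrow> nat \<Rightarrow> nat \<Rightarrow> nat \<times> nat" where
  "test_alloc mt s1 s2 =
     (if s1 + s2 \<le> mt then (s1, s2)
      else if 2 * s1 > mt \<and> 2 * s2 > mt then (mt div 2, mt div 2)
      else if 2 * s1 > mt then (mt - s2, s2)
      else (s1, mt - s1))"

text \<open>Distribution of the estimate \<open>r_hat\<close> of a type with t tested agents and
  true mean r: empirical mean of t i.i.d. Bernoulli(r) rewards, or Uniform(0,1) if t = 0.\<close>
definition est_measure :: "nat \<Rightarrow> real \<Rightarrow> real measure" where
  "est_measure t r =
     (if t = 0 then uniform_measure lborel {0..1}
      else distr (measure_pmf (binomial_pmf t r)) borel (\<lambda>k. real k / real t))"

text \<open>Protection level policy run on an arrival sequence. Parameters: m (capacity),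
  i (protected type), x (protection level); state (a1, a2) = accepted counts.\<close>
fun prot_run :: "nat \<Rightarrow> bool \<Rightarrow> real \<Rightarrow> bool list \<Rightarrow> nat \<times> nat \<Rightarrow> nat \<times> nat" where
  "prot_run m i x [] a = a"
| "prot_run m i x (t # ts) (a1, a2) =
     (let acc = (a1 + a2 < m \<and> (t = i \<or> real (if t then a1 else a2) < real m - x))
      in prot_run m i x ts
           (if acc then (if t then (Suc a1, a2) else (a1, Suc a2)) else (a1, a2)))"

definition prot_reward :: "nat \<Rightarrow> bool \<Rightarrow> real \<Rightarrow> real \<Rightarrow> real \<Rightarrow> bool list \<Rightarrow> real" where
  "prot_reward m i x r1 r2 I =
     (case prot_run m i x I (0, 0) of (a1, a2) \<Rightarrow> r1 * real a1 + r2 * real a2)"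

definition opt_val :: "nat \<Rightarrow> real \<Rightarrow> real \<Rightarrow> nat \<Rightarrow> nat \<Rightarrow> real" where
  "opt_val m r1 r2 n1 n2 = r1 * real (min n1 m) + r2 * real (min n2 (m - n1))"

definition orders :: "nat \<Rightarrow> nat \<Rightarrow> bool list set" where
  "orders n1 n2 = {I. length (filter (\<lambda>t. t) I) = n1 \<and> length (filter Not I) = n2}"

text \<open>Ratio REW/OPT, with the convention 0/0 = 1 (OPT = 0 only if no agent arrives).\<close>
definition ratio :: "real \<Rightarrow> real \<Rightarrow> real" where
  "ratio rew opt = (if opt = 0 then 1 else rew / opt)"

definition worst_ratio :: "nat \<Rightarrow> bool \<Rightarrow> real \<Rightarrow> real \<Rightarrow> real \<Rightarrow> nat \<Rightarrow> nat \<Rightarrow> real" where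
  "worst_ratio m i x r1 r2 n1 n2 =
     (INF I \<in> orders n1 n2. ratio (prot_reward m i x r1 r2 I) (opt_val m r1 r2 n1 n2))"

definition alg_value :: "nat \<Rightarrow> nat \<Rightarrow> real \<Rightarrow> real \<Rightarrow> real \<Rightarrow> nat \<Rightarrow> nat \<Rightarrow> nat \<Rightarrow> nat \<Rightarrow> real" where
  "alg_value m mt p r1 r2 h l s1 s2 =
     (let n1 = h - s1; n2 = l - s2;
          t1 = fst (test_alloc mt s1 s2); t2 = snd (test_alloc mt s1 s2);
          x1 = min (real m) (real s1 * (1 - p) / p);
          x2 = min (real m) (real s2 * (1 - p) / p)
      in integral\<^sup>L (est_measure t1 r1 \<Otimes>\<^sub>M est_measure t2 r2)
           (\<lambda>z. if fst z > snd z then worst_ratio m True x1 r1 r2 n1 n2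
                 else worst_ratio m False x2 r1 r2 n1 n2))"

text \<open>Competitive ratio: infimum over the adversary's (h, l) of the expectation over
  sampling s1 ~ Bin(h,p), s2 ~ Bin(l,p).\<close>
definition comp_ratio :: "nat \<Rightarrow> nat \<Rightarrow> real \<Rightarrow> real \<Rightarrow> real \<Rightarrow> real" where
  "comp_ratio m mt p r1 r2 =
     (INF hl \<in> (UNIV :: (nat \<times> nat) set).
        measure_pmf.expectation (pair_pmf (binomial_pmf (fst hl) p) (binomial_pmf (snd hl) p))
          (\<lambda>s. alg_value m mt p r1 r2 (fst hl) (snd hl) (fst s) (snd s)))"

end

theory Submission
  imports Defs
begin


abbreviation cT :: "bool list \<Rightarrow> nat" where "cT ts \<equiv> length (filter (\<lambda>t. t) ts)"
abbreviation cF :: "bool list \<Rightarrow> nat" where "cF ts \<equiv> length (filter Not ts)"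

lemma prot_run_append:
  "prot_run m i x (xs @ ys) a = prot_run m i x ys (prot_run m i x xs a)"
  by (induction xs arbitrary: a) (auto simp: Let_def split: prod.splits)

lemma prot_run_full:
  "a1 + a2 = m \<Longrightarrow> prot_run m i x ts (a1, a2) = (a1, a2)"
  by (induction ts) (auto simp: Let_def)

lemma prot_run_basic:
  assumes "prot_run m i x ts (a1, a2) = (b1, b2)" "a1 + a2 \<le> m"
  shows "a1 \<le> b1 \<and> b1 \<le> a1 + cT ts \<and> a2 \<le> b2 \<and> b2 \<le> a2 + cF ts \<and> b1 + b2 \<le> m"
  using assms
proof (induction ts arbitrary: a1 a2)
  case Nil
  then show ?case by simp
next
  case (Cons t ts)
  show ?case
  proof (cases t)
    case True
    then show ?thesis using Cons.prems Cons.IH[of "Suc a1" a2] Cons.IH[of a1 a2]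
      by (auto simp: Let_def split: if_splits)
  next
    case False
    then show ?thesis using Cons.prems Cons.IH[of a1 "Suc a2"] Cons.IH[of a1 a2]
      by (auto simp: Let_def split: if_splits)
  qed
qed

lemma prot_run_T2:
  assumes "prot_run m True x ts (a1, a2) = (b1, b2)" "a1 + a2 \<le> m"
  shows "b1 + b2 = m \<or> b1 = a1 + cT ts"
  using assms
proof (induction ts arbitrary: a1 a2)
  case Nil
  then show ?case by simp
next
  case (Cons t ts)
  show ?case
  proof (cases "a1 + a2 < m")
    case True
    then show ?thesis using Cons.prems Cons.IH[of "Suc a1" a2] Cons.IH[of a1 a2] Cons.IH[of a1 "Suc a2"]
      by (cases t) (auto simp: Let_def split: if_splits)
  next
    case False
    then have "a1 + a2 = m" using Cons.prems by simp
    then show ?thesis using Cons.prems prot_run_full[of a1 a2 m True x ts]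
      by (auto simp: Let_def)
  qed
qed

lemma prot_run_T3:
  assumes "prot_run m True x ts (a1, a2) = (b1, b2)" "real a2 < real m - x + 1"
  shows "real b2 < real m - x + 1"
  using assms
proof (induction ts arbitrary: a1 a2)
  case Nil
  then show ?case by simp
next
  case (Cons t ts)
  show ?case
    using Cons.prems Cons.IH[of "Suc a1" a2] Cons.IH[of a1 a2] Cons.IH[of a1 "Suc a2"]
    by (cases t) (auto simp: Let_def split: if_splits)
qed

lemma prot_run_T4:
  assumes "prot_run m True x ts (a1, a2) = (b1, b2)" "a1 + a2 \<le> m"
  shows "b1 + b2 = m \<or> b2 = a2 + cF ts \<or> real b2 \<ge> real m - x"
  using assms
proof (induction ts arbitrary: a1 a2)
  case Nil
  then show ?case by simp
next
  case (Cons t ts)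
  show ?case
  proof (cases "a1 + a2 < m")
    case True
    show ?thesis
    proof (cases t)
      case True
      then show ?thesis using Cons.prems Cons.IH[of "Suc a1" a2] \<open>a1 + a2 < m\<close>
        by (auto simp: Let_def)
    next
      case False
      show ?thesis
      proof (cases "real a2 < real m - x")
        case True
        then show ?thesis using Cons.prems Cons.IH[of a1 "Suc a2"] \<open>a1 + a2 < m\<close> \<open>\<not> t\<close>
          by (auto simp: Let_def)
      next
        case F2: False
        have "prot_run m True x ts (a1, a2) = (b1, b2)"
          using Cons.prems \<open>\<not> t\<close> F2 by (auto simp: Let_def)
        then have "a2 \<le> b2" using prot_run_basic[of m True x ts a1 a2 b1 b2] Cons.prems by auto
        then show ?thesis using F2 by auto
      qed
    qed
  next
    case False
    then have "a1 + a2 = m" using Cons.prems by simp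
    then show ?thesis using Cons.prems prot_run_full[of a1 a2 m True x ts]
      by (auto simp: Let_def)
  qed
qed

lemma prot_run_swap:
  "prot_run m False x ts (a1, a2) = prod.swap (prot_run m True x (map Not ts) (a2, a1))"
proof (induction ts arbitrary: a1 a2)
  case Nil
  then show ?case by simp
next
  case (Cons t ts)
  then show ?case by (cases t) (auto simp: Let_def add.commute)
qed

lemma cT_map_Not: "cT (map Not ts) = cF ts" and cF_map_Not: "cF (map Not ts) = cT ts"
  and cT_o: "length (filter ((\<lambda>t. t) \<circ> Not) ts) = cF ts"
  and cF_o: "length (filter (Not \<circ> Not) ts) = cT ts"
  by (induction ts) auto

lemma prot_run_F:
  assumes "prot_run m False x ts (a1, a2) = (b1, b2)" "a1 + a2 \<le> m"
  shows "a1 \<le> b1 \<and> b1 \<le> a1 + cT ts \<and> a2 \<le> b2 \<and> b2 \<le> a2 + cF ts \<and> b1 + b2 \<le> m"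
    "b1 + b2 = m \<or> b2 = a2 + cF ts"
    "real a1 < real m - x + 1 \<Longrightarrow> real b1 < real m - x + 1"
    "b1 + b2 = m \<or> b1 = a1 + cT ts \<or> real b1 \<ge> real m - x"
proof -
  have e: "prot_run m True x (map Not ts) (a2, a1) = (b2, b1)"
    using assms(1) prot_run_swap[of m x ts a1 a2] by (cases "prot_run m True x (map Not ts) (a2, a1)") auto
  have s: "a2 + a1 \<le> m" using assms by simp
  show "a1 \<le> b1 \<and> b1 \<le> a1 + cT ts \<and> a2 \<le> b2 \<and> b2 \<le> a2 + cF ts \<and> b1 + b2 \<le> m"
    using prot_run_basic[OF e s] by (simp add: cT_o cF_o)
  show "b1 + b2 = m \<or> b2 = a2 + cF ts"
    using prot_run_T2[OF e s] by (simp add: cT_o add.commute)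
  show "real a1 < real m - x + 1 \<Longrightarrow> real b1 < real m - x + 1"
    using prot_run_T3[OF e] by simp
  show "b1 + b2 = m \<or> b1 = a1 + cT ts \<or> real b1 \<ge> real m - x"
    using prot_run_T4[OF e s] by (simp add: cF_o add.commute)
qed


lemma ratio_ge_aux:
  fixes OPT REW E :: real
  assumes "OPT \<ge> 0" "E \<ge> 0" "OPT - REW \<le> E * OPT"
  shows "ratio REW OPT \<ge> 1 - E"
proof (cases "OPT = 0")
  case True then show ?thesis using assms by (simp add: ratio_def)
next
  case False
  then have "OPT > 0" using assms by simp
  have "1 - E = (OPT - E * OPT) / OPT" using \<open>OPT > 0\<close> by (simp add: field_simps)
  also have "\<dots> \<le> REW / OPT" using assms \<open>OPT > 0\<close> by (intro divide_right_mono) auto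
  finally show ?thesis using False by (simp add: ratio_def)
qed

lemma loss_T:
  fixes b1 b2 n1 n2 m :: nat and x r1 r2 :: real
  assumes r: "0 < r2" "r2 < r1" and m: "m > 0" and x: "0 \<le> x" "x \<le> real m"
    and f1: "b1 \<le> n1" "b2 \<le> n2" "b1 + b2 \<le> m"
    and f2: "b1 + b2 = m \<or> b1 = n1"
    and f3: "real b2 < real m - x + 1"
    and f4: "b1 + b2 = m \<or> b2 = n2 \<or> real b2 \<ge> real m - x"
  shows "ratio (r1 * b1 + r2 * b2) (opt_val m r1 r2 n1 n2)
           \<ge> 1 - (2 + 2 * r1 / r2) * (\<bar>x - real (min n1 m)\<bar> + 1) / m"
proof -
  define C where "C = 2 + 2 * r1 / r2"
  define d where "d = \<bar>x - real (min n1 m)\<bar>"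
  define A where "A = real (min n1 m)"
  define Bo where "Bo = real (min n2 (m - n1))"
  define OPT where "OPT = r1 * A + r2 * Bo"
  define REW where "REW = r1 * b1 + r2 * b2"
  define E where "E = C * (d + 1) / m"
  have opt: "opt_val m r1 r2 n1 n2 = OPT" unfolding opt_val_def OPT_def A_def Bo_def by simp
  have C2: "C \<ge> 2" unfolding C_def using r by (simp add: field_simps)
  have Cr: "C * r2 \<ge> r1" unfolding C_def using r by (simp add: field_simps)
  have d0: "d \<ge> 0" unfolding d_def by simp
  have E0: "E \<ge> 0" unfolding E_def using C2 d0 m by simp
  have Em: "E * m = C * (d + 1)" unfolding E_def using m by simp
  have OPT0: "OPT \<ge> 0" unfolding OPT_def A_def Bo_def using r by simp
  have REW0: "REW \<ge> 0" unfolding REW_def using r by simp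
  have ABo: "A + Bo \<le> m" unfolding A_def Bo_def by auto
  have key: "OPT - REW \<le> E * OPT"
  proof (cases "b1 + b2 = m")
    case True
    have "n1 + n2 \<ge> m" using True f1 by linarith
    have OPTm: "OPT \<ge> r2 * m"
    proof (cases "n1 \<ge> m")
      case True
      then have "A = m" unfolding A_def by simp
      have "r2 * m \<le> r1 * m" using r by (intro mult_right_mono) auto
      moreover have "r2 * Bo \<ge> 0" unfolding Bo_def using r by simp
      ultimately show ?thesis unfolding OPT_def \<open>A = m\<close> by linarith
    next
      case False
      then have "A = n1" "Bo = m - n1" unfolding A_def Bo_def using \<open>n1 + n2 \<ge> m\<close> by auto
      then have "OPT = r1 * n1 + r2 * (m - n1)" unfolding OPT_def by simp
      also have "\<dots> \<ge> r2 * n1 + r2 * (m - n1)" using r by (simp add: mult_right_mono)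
      also have "r2 * n1 + r2 * (m - n1) = r2 * m" using False by (simp add: of_nat_diff algebra_simps)
      finally show ?thesis .
    qed
    have bb: "real b1 + real b2 = real m" using True by (metis of_nat_add)
    moreover have "REW = r1 * b1 + r2 * (real m - b1)" unfolding REW_def using bb by (simp flip: bb)
    moreover have "OPT \<le> r1 * A + r2 * (m - A)" unfolding OPT_def using ABo r by (simp add: mult_left_mono)
    ultimately have l1: "OPT - REW \<le> (r1 - r2) * (A - b1)" by (simp add: algebra_simps)
    have "real b1 > x - 1" using f3 bb by linarith
    then have "A - b1 \<le> d + 1" unfolding d_def A_def by linarith
    moreover have "A - b1 \<ge> 0" unfolding A_def using f1 True by auto
    ultimately have "(r1 - r2) * (A - b1) \<le> (r1 - r2) * (d + 1)" using r by (intro mult_left_mono) auto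
    also have "\<dots> \<le> C * r2 * (d + 1)" using Cr r d0 by (intro mult_right_mono) auto
    also have "\<dots> = (E * m) * r2" using Em by (simp add: algebra_simps)
    also have "\<dots> = E * (r2 * m)" by (simp add: algebra_simps)
    also have "\<dots> \<le> E * OPT" using OPTm E0 by (intro mult_left_mono) auto
    finally show ?thesis using l1 by simp
  next
    case False
    then have b1: "b1 = n1" and n1m: "n1 < m" using f2 f1 by auto
    have A: "A = n1" unfolding A_def using n1m by simp
    have Bon: "Bo \<le> n2" "Bo \<le> m - real n1" unfolding Bo_def using n1m by auto
    consider "b2 = n2" | "real b2 \<ge> real m - x" using f4 False by auto
    then show ?thesis
    proof cases
      case 1
      then have "OPT - REW \<le> 0" unfolding OPT_def REW_def A using b1 Bon r
        by (simp add: mult_left_mono)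
      then show ?thesis using E0 OPT0 by (meson order_trans zero_le_mult_iff)
    next
      case 2
      have l: "OPT - REW = r2 * (Bo - b2)" unfolding OPT_def REW_def A b1 by (simp add: algebra_simps)
      show ?thesis
      proof (cases "Bo - m + x \<le> 0")
        case True
        then have "Bo - b2 \<le> 0" using 2 by linarith
        then have "OPT - REW \<le> 0" using l r mult_nonneg_nonpos[of r2 "Bo - b2"] by simp
        then show ?thesis using E0 OPT0 by (meson order_trans zero_le_mult_iff)
      next
        case False
        have OPTT: "OPT \<ge> r2 * (n1 + Bo)" unfolding OPT_def A using r
          by (simp add: algebra_simps mult_right_mono)
        show ?thesis
        proof (cases "n1 + Bo \<ge> m / 2")
          case True
          have "OPT - REW \<le> r2 * (x - n1)" using l 2 Bon r by (simp add: mult_left_mono)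
          also have "\<dots> \<le> r2 * (d + 1)" unfolding d_def A_def using n1m r by (intro mult_left_mono) auto
          also have "\<dots> \<le> (C / 2) * r2 * (d + 1)" using C2 r d0 by (intro mult_right_mono) auto
          also have "\<dots> = (E * m) * r2 / 2" using Em by (simp add: algebra_simps)
          also have "\<dots> = E * (r2 * (m / 2))" by (simp add: algebra_simps)
          also have "\<dots> \<le> E * OPT"
          proof (intro mult_left_mono E0)
            have "r2 * (m / 2) \<le> r2 * (n1 + Bo)" using True r by (intro mult_left_mono) auto
            then show "r2 * (m / 2) \<le> OPT" using OPTT by linarith
          qed
          finally show ?thesis .
        next
          case F2: False
          have "x - n1 > m / 2" using False F2 by linarith
          then have "d > m / 2" unfolding d_def A_def using n1m by auto
          then have "E * m \<ge> C * (m / 2 + 1)" using Em C2 by (simp add: mult_left_mono)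
          moreover have "C * (m / 2 + 1) \<ge> 2 * (m / 2 + 1)" using C2 by (intro mult_right_mono) auto
          moreover have "2 * (real m / 2 + 1) = m + 2" by simp
          ultimately have "E * m \<ge> m" by linarith
          then have "E \<ge> 1" using m by simp
          then have "E * OPT \<ge> 1 * OPT" using OPT0 by (intro mult_right_mono) auto
          then show ?thesis using REW0 by linarith
        qed
      qed
    qed
  qed
  show ?thesis
    using ratio_ge_aux[OF OPT0 E0 key] unfolding opt REW_def E_def C_def d_def by simp
qed


lemma loss_F:
  fixes b1 b2 n1 n2 m :: nat and x r1 r2 :: real
  assumes r: "0 < r2" "r2 < r1" and m: "m > 0" and x: "0 \<le> x" "x \<le> real m"
    and f1: "b1 \<le> n1" "b2 \<le> n2" "b1 + b2 \<le> m"
    and f2: "b1 + b2 = m \<or> b2 = n2"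
    and f4: "b1 + b2 = m \<or> b1 = n1 \<or> real b1 \<ge> real m - x"
  shows "ratio (r1 * b1 + r2 * b2) (opt_val m r1 r2 n1 n2)
           \<ge> 1 - (2 + 2 * r1 / r2) * (real (min n1 n2) + \<bar>x - real (min n2 m)\<bar> + 1) / m"
proof -
  define C where "C = 2 + 2 * r1 / r2"
  define d where "d = \<bar>x - real (min n2 m)\<bar>"
  define \<mu> where "\<mu> = real (min n1 n2)"
  define A where "A = real (min n1 m)"
  define Bo where "Bo = real (min n2 (m - n1))"
  define OPT where "OPT = r1 * A + r2 * Bo"
  define REW where "REW = r1 * b1 + r2 * b2"
  define E where "E = C * (\<mu> + d + 1) / m"
  have opt: "opt_val m r1 r2 n1 n2 = OPT" unfolding opt_val_def OPT_def A_def Bo_def by simp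
  have C2: "C \<ge> 2" unfolding C_def using r by (simp add: field_simps)
  have Cr: "C * r2 \<ge> r1" unfolding C_def using r by (simp add: field_simps)
  have d0: "d \<ge> 0" unfolding d_def by simp
  have mu0: "\<mu> \<ge> 0" unfolding \<mu>_def by simp
  have E0: "E \<ge> 0" unfolding E_def using C2 d0 mu0 m by simp
  have Em: "E * m = C * (\<mu> + d + 1)" unfolding E_def using m by simp
  have OPT0: "OPT \<ge> 0" unfolding OPT_def A_def Bo_def using r by simp
  have REW0: "REW \<ge> 0" unfolding REW_def using r by simp
  have ABo: "A + Bo \<le> m" unfolding A_def Bo_def by auto
  have key: "OPT - REW \<le> E * OPT"
  proof (cases "b1 + b2 = m")
    case True
    have "n1 + n2 \<ge> m" using True f1 by linarith
    have OPTm: "OPT \<ge> r2 * m"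
    proof (cases "n1 \<ge> m")
      case True
      then have "A = m" unfolding A_def by simp
      have "r2 * m \<le> r1 * m" using r by (intro mult_right_mono) auto
      moreover have "r2 * Bo \<ge> 0" unfolding Bo_def using r by simp
      ultimately show ?thesis unfolding OPT_def \<open>A = m\<close> by linarith
    next
      case False
      then have "A = n1" "Bo = m - n1" unfolding A_def Bo_def using \<open>n1 + n2 \<ge> m\<close> by auto
      then have "OPT = r1 * n1 + r2 * (m - n1)" unfolding OPT_def by simp
      also have "\<dots> \<ge> r2 * n1 + r2 * (m - n1)" using r by (simp add: mult_right_mono)
      also have "r2 * n1 + r2 * (m - n1) = r2 * m" using False by (simp add: of_nat_diff algebra_simps)
      finally show ?thesis .
    qed
    have bb: "real b1 + real b2 = real m" using True by (metis of_nat_add)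
    have "REW = r1 * b1 + r2 * (real m - b1)" unfolding REW_def using bb by (simp flip: bb)
    moreover have "OPT \<le> r1 * A + r2 * (m - A)" unfolding OPT_def using ABo r by (simp add: mult_left_mono)
    ultimately have l1: "OPT - REW \<le> (r1 - r2) * (A - b1)" by (simp add: algebra_simps)
    have "A - b1 \<le> \<mu>" unfolding A_def \<mu>_def using f1 bb by auto
    then have "A - b1 \<le> \<mu> + d + 1" using d0 by linarith
    then have "(r1 - r2) * (A - b1) \<le> (r1 - r2) * (\<mu> + d + 1)" using r by (intro mult_left_mono) auto
    also have "\<dots> \<le> C * r2 * (\<mu> + d + 1)" using Cr r d0 mu0 by (intro mult_right_mono) auto
    also have "\<dots> = (E * m) * r2" using Em by (simp add: algebra_simps)
    also have "\<dots> = E * (r2 * m)" by (simp add: algebra_simps)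
    also have "\<dots> \<le> E * OPT" using OPTm E0 by (intro mult_left_mono) auto
    finally show ?thesis using l1 by simp
  next
    case False
    then have b2: "b2 = n2" and n2m: "b1 + n2 < m" using f2 f1 by auto
    have Bon: "Bo \<le> n2" unfolding Bo_def by auto
    have Am: "A \<le> m" "A \<le> n1" unfolding A_def by auto
    consider "b1 = n1" | "b1 < n1" "real b1 \<ge> real m - x" using f4 False f1 by force
    then show ?thesis
    proof cases
      case 1
      have "r1 * A \<le> r1 * n1" using Am r by (intro mult_left_mono) auto
      moreover have "r2 * Bo \<le> r2 * n2" using Bon r by (intro mult_left_mono) auto
      ultimately have "OPT - REW \<le> 0" unfolding OPT_def REW_def using b2 1 by simp
      then show ?thesis using E0 OPT0 by (meson order_trans zero_le_mult_iff)
    next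
      case 2
      have "OPT \<le> r1 * A + r2 * n2" unfolding OPT_def using Bon r by (simp add: mult_left_mono)
      then have l: "OPT - REW \<le> r1 * (A - b1)" unfolding REW_def b2 by (simp add: algebra_simps)
      have "A - b1 \<le> \<mu> + d"
      proof (cases "n1 \<le> n2")
        case True
        then have "\<mu> = n1" unfolding \<mu>_def by simp
        then show ?thesis using Am d0 by simp
      next
        case False
        then have "\<mu> = n2" unfolding \<mu>_def by simp
        moreover have "min n2 m = n2" using n2m by simp
        ultimately have "x \<le> \<mu> + d" unfolding d_def by simp
        then show ?thesis using 2 Am by linarith
      qed
      then have "r1 * (A - b1) \<le> r1 * (\<mu> + d)" using r by (intro mult_left_mono) auto
      then have l2: "OPT - REW \<le> r1 * (\<mu> + d)" using l by linarith
      have "r2 * A \<le> r1 * A" using r unfolding A_def by (intro mult_right_mono) auto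
      then have OPTT: "OPT \<ge> r2 * (A + Bo)" unfolding OPT_def by (simp add: distrib_left)
      show ?thesis
      proof (cases "A + Bo \<ge> m / 2")
        case True
        have Cr2: "C * r2 / 2 \<ge> r1" unfolding C_def using r by (simp add: field_simps)
        have "r1 * (\<mu> + d) \<le> (C * r2 / 2) * (\<mu> + d)" using Cr2 d0 mu0 by (intro mult_right_mono) auto
        also have "\<dots> \<le> (C * r2 / 2) * (\<mu> + d + 1)" using Cr2 r by (intro mult_left_mono) auto
        also have "\<dots> = C * r2 * (\<mu> + d + 1) / 2" by simp
        finally have "r1 * (\<mu> + d) \<le> C * r2 * (\<mu> + d + 1) / 2" .
        also have "\<dots> = (E * m) * r2 / 2" using Em by (simp add: algebra_simps)
        also have "\<dots> = E * (r2 * (m / 2))" by (simp add: algebra_simps)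
        also have "\<dots> \<le> E * OPT"
        proof (intro mult_left_mono E0)
          have "r2 * (m / 2) \<le> r2 * (A + Bo)" using True r by (intro mult_left_mono) auto
          then show "r2 * (m / 2) \<le> OPT" using OPTT by linarith
        qed
        finally show ?thesis using l2 by linarith
      next
        case F2: False
        have "n1 < m" using F2 unfolding A_def Bo_def by auto
        then have "A = n1" unfolding A_def by simp
        have "Bo = n2" using F2 \<open>n1 < m\<close> unfolding Bo_def A_def by (auto simp: min_def split: if_splits)
        have "min n2 m = n2" using n2m by simp
        have "x > m / 2 + n2" using 2 F2 \<open>A = n1\<close> \<open>Bo = n2\<close> by linarith
        then have "d > m / 2" unfolding d_def \<open>min n2 m = n2\<close> by auto
        then have "E * m \<ge> C * (m / 2 + 1)" using Em C2 mu0 by (simp add: mult_left_mono)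
        moreover have "C * (m / 2 + 1) \<ge> 2 * (m / 2 + 1)" using C2 by (intro mult_right_mono) auto
        moreover have "2 * (real m / 2 + 1) = m + 2" by simp
        ultimately have "E * m \<ge> m" by linarith
        then have "E \<ge> 1" using m by simp
        then have "E * OPT \<ge> 1 * OPT" using OPT0 by (intro mult_right_mono) auto
        then show ?thesis using REW0 by linarith
      qed
    qed
  qed
  show ?thesis
    using ratio_ge_aux[OF OPT0 E0 key] unfolding opt REW_def E_def C_def d_def \<mu>_def by simp
qed


lemma orders_cnt: "I \<in> orders n1 n2 \<Longrightarrow> cT I = n1 \<and> cF I = n2"
  unfolding orders_def by simp

lemma orders_ne: "replicate n2 False @ replicate n1 True \<in> orders n1 n2"
  unfolding orders_def by simp

lemma ratio_nonneg: "rew \<ge> 0 \<Longrightarrow> opt \<ge> 0 \<Longrightarrow> ratio rew opt \<ge> 0"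
  unfolding ratio_def by simp

lemma prot_reward_nonneg: "r1 > 0 \<Longrightarrow> r2 > 0 \<Longrightarrow> prot_reward m i x r1 r2 I \<ge> 0"
  unfolding prot_reward_def by (auto split: prod.splits)

lemma opt_val_nonneg: "r1 > 0 \<Longrightarrow> r2 > 0 \<Longrightarrow> opt_val m r1 r2 n1 n2 \<ge> 0"
  unfolding opt_val_def by simp

lemma ratio_le1:
  fixes b1 b2 n1 n2 m :: nat and r1 r2 :: real
  assumes r: "0 < r2" "r2 < r1" and f1: "b1 \<le> n1" "b2 \<le> n2" "b1 + b2 \<le> m"
  shows "ratio (r1 * b1 + r2 * b2) (opt_val m r1 r2 n1 n2) \<le> 1"
proof -
  define OPT where "OPT = opt_val m r1 r2 n1 n2"
  have le: "r1 * b1 + r2 * b2 \<le> OPT"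
  proof (cases "b2 \<le> min n2 (m - n1)")
    case True
    have "b1 \<le> min n1 m" using f1 by simp
    then have "r1 * b1 \<le> r1 * min n1 m" using r by (intro mult_left_mono) auto
    moreover have "r2 * b2 \<le> r2 * min n2 (m - n1)" using r True by (intro mult_left_mono) auto
    ultimately show ?thesis unfolding OPT_def opt_val_def by linarith
  next
    case False
    then have b2g: "b2 > m - n1" using f1 by auto
    have "real b1 \<le> real m - real b2" using f1 by linarith
    then have "r1 * b1 \<le> r1 * (real m - b2)" using r by (intro mult_left_mono) auto
    show ?thesis
    proof (cases "n1 \<ge> m")
      case True
      have "r2 * b2 \<le> r1 * b2" using r by (intro mult_right_mono) auto
      then have "r1 * b1 + r2 * b2 \<le> r1 * m" using \<open>r1 * b1 \<le> r1 * (real m - b2)\<close>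
        by (simp add: algebra_simps)
      then show ?thesis unfolding OPT_def opt_val_def using True r by simp
    next
      case False
      then have o: "OPT = r1 * n1 + r2 * (real m - n1)" unfolding OPT_def opt_val_def using b2g f1
        by (simp add: of_nat_diff min_def)
      have "(r1 - r2) * (real m - n1) \<le> (r1 - r2) * b2" using b2g r False by (intro mult_left_mono) auto
      then show ?thesis unfolding o using \<open>r1 * b1 \<le> r1 * (real m - b2)\<close>
        by (simp add: algebra_simps)
    qed
  qed
  show ?thesis
  proof (cases "OPT = 0")
    case True then show ?thesis unfolding ratio_def OPT_def by simp
  next
    case False
    then have "OPT > 0" using opt_val_nonneg[of r1 r2 m n1 n2] r unfolding OPT_def by simp
    then show ?thesis using le unfolding ratio_def OPT_def by (simp add: field_simps)
  qed
qed

lemma worst_ratio_range: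
  assumes r: "0 < r2" "r2 < r1"
  shows "worst_ratio m i x r1 r2 n1 n2 \<ge> 0" "worst_ratio m i x r1 r2 n1 n2 \<le> 1"
proof -
  have ne: "orders n1 n2 \<noteq> {}" using orders_ne by blast
  have nn: "\<And>I. ratio (prot_reward m i x r1 r2 I) (opt_val m r1 r2 n1 n2) \<ge> 0"
    using r by (intro ratio_nonneg prot_reward_nonneg opt_val_nonneg) auto
  show "worst_ratio m i x r1 r2 n1 n2 \<ge> 0"
    unfolding worst_ratio_def using ne nn by (intro cINF_greatest) auto
  define I where "I = replicate n2 False @ replicate n1 True"
  have I: "I \<in> orders n1 n2" unfolding I_def by (rule orders_ne)
  obtain b1 b2 where e: "prot_run m i x I (0, 0) = (b1, b2)" by fastforce
  have "b1 \<le> n1 \<and> b2 \<le> n2 \<and> b1 + b2 \<le> m"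
    using prot_run_basic[OF e] orders_cnt[OF I] by simp
  then have "ratio (prot_reward m i x r1 r2 I) (opt_val m r1 r2 n1 n2) \<le> 1"
    unfolding prot_reward_def e using r by (simp add: ratio_le1)
  moreover have "bdd_below ((\<lambda>I. ratio (prot_reward m i x r1 r2 I) (opt_val m r1 r2 n1 n2)) ` orders n1 n2)"
    using nn by (intro bdd_belowI[of _ 0]) auto
  ultimately show "worst_ratio m i x r1 r2 n1 n2 \<le> 1"
    unfolding worst_ratio_def using I by (meson cINF_lower order_trans)
qed

lemma W1_lower:
  assumes r: "0 < r2" "r2 < r1" and m: "m > 0" and x: "0 \<le> x" "x \<le> real m"
  shows "worst_ratio m True x r1 r2 n1 n2 \<ge> 1 - (2 + 2 * r1 / r2) * (\<bar>x - real (min n1 m)\<bar> + 1) / m"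
  unfolding worst_ratio_def
proof (rule cINF_greatest)
  show "orders n1 n2 \<noteq> {}" using orders_ne by blast
  fix I assume I: "I \<in> orders n1 n2"
  obtain b1 b2 where e: "prot_run m True x I (0, 0) = (b1, b2)" by fastforce
  have c: "cT I = n1" "cF I = n2" using orders_cnt[OF I] by auto
  have f1: "b1 \<le> n1" "b2 \<le> n2" "b1 + b2 \<le> m" using prot_run_basic[OF e] c by auto
  have f2: "b1 + b2 = m \<or> b1 = n1" using prot_run_T2[OF e] c by auto
  have f3: "real b2 < real m - x + 1" using prot_run_T3[OF e] x by auto
  have f4: "b1 + b2 = m \<or> b2 = n2 \<or> real b2 \<ge> real m - x" using prot_run_T4[OF e] c by auto
  show "1 - (2 + 2 * r1 / r2) * (\<bar>x - real (min n1 m)\<bar> + 1) / m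
        \<le> ratio (prot_reward m True x r1 r2 I) (opt_val m r1 r2 n1 n2)"
    unfolding prot_reward_def e using loss_T[OF r m x f1 f2 f3 f4] by simp
qed

lemma W2_lower:
  assumes r: "0 < r2" "r2 < r1" and m: "m > 0" and x: "0 \<le> x" "x \<le> real m"
  shows "worst_ratio m False x r1 r2 n1 n2
          \<ge> 1 - (2 + 2 * r1 / r2) * (real (min n1 n2) + \<bar>x - real (min n2 m)\<bar> + 1) / m"
  unfolding worst_ratio_def
proof (rule cINF_greatest)
  show "orders n1 n2 \<noteq> {}" using orders_ne by blast
  fix I assume I: "I \<in> orders n1 n2"
  obtain b1 b2 where e: "prot_run m False x I (0, 0) = (b1, b2)" by fastforce
  have c: "cT I = n1" "cF I = n2" using orders_cnt[OF I] by auto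
  note F = prot_run_F[OF e]
  have f1: "b1 \<le> n1" "b2 \<le> n2" "b1 + b2 \<le> m" using F(1) c by auto
  have f2: "b1 + b2 = m \<or> b2 = n2" using F(2) c by auto
  have f4: "b1 + b2 = m \<or> b1 = n1 \<or> real b1 \<ge> real m - x" using F(4) c by auto
  show "1 - (2 + 2 * r1 / r2) * (real (min n1 n2) + \<bar>x - real (min n2 m)\<bar> + 1) / m
        \<le> ratio (prot_reward m False x r1 r2 I) (opt_val m r1 r2 n1 n2)"
    unfolding prot_reward_def e using loss_F[OF r m x f1 f2 f4] by simp
qed


lemma ratio_upper:
  fixes n1 n2 m :: nat and r1 r2 REW L :: real
  assumes r: "0 < r2" "r2 < r1" and m: "m > 0" and n: "n1 \<le> m" "m \<le> n2"
    and L: "L \<ge> 0" "opt_val m r1 r2 n1 n2 - REW \<ge> L"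
  shows "ratio REW (opt_val m r1 r2 n1 n2) \<le> 1 - L / (r1 * m)"
proof -
  define OPT where "OPT = opt_val m r1 r2 n1 n2"
  have o: "OPT = r1 * n1 + r2 * (real m - n1)" unfolding OPT_def opt_val_def using n
    by (simp add: of_nat_diff)
  have "r2 * (real m - n1) \<le> r1 * (real m - n1)" using r n by (intro mult_right_mono) auto
  then have Om: "OPT \<le> r1 * m" unfolding o by (simp add: algebra_simps)
  have "r2 * n1 \<le> r1 * n1" using r by (intro mult_right_mono) auto
  then have "OPT \<ge> r2 * m" unfolding o by (simp add: algebra_simps)
  moreover have "r2 * m > 0" using r m by simp
  ultimately have O0: "OPT > 0" by linarith
  have "L / (r1 * m) \<le> L / OPT" using O0 Om L by (intro divide_left_mono) auto
  also have "L / OPT \<le> (OPT - REW) / OPT" using O0 L by (intro divide_right_mono) (auto simp: OPT_def)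
  also have "\<dots> = 1 - REW / OPT" using O0 by (simp add: field_simps)
  finally show ?thesis using O0 unfolding ratio_def OPT_def by simp
qed

lemma worst_le_ratio:
  assumes r: "0 < r2" "r2 < r1" and I: "I \<in> orders n1 n2"
  shows "worst_ratio m i x r1 r2 n1 n2 \<le> ratio (prot_reward m i x r1 r2 I) (opt_val m r1 r2 n1 n2)"
proof -
  have nn: "\<And>I. ratio (prot_reward m i x r1 r2 I) (opt_val m r1 r2 n1 n2) \<ge> 0"
    using r by (intro ratio_nonneg prot_reward_nonneg opt_val_nonneg) auto
  have "bdd_below ((\<lambda>I. ratio (prot_reward m i x r1 r2 I) (opt_val m r1 r2 n1 n2)) ` orders n1 n2)"
    using nn by (intro bdd_belowI[of _ 0]) auto
  then show ?thesis unfolding worst_ratio_def using I by (rule cINF_lower)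
qed

lemma W1_upper:
  assumes r: "0 < r2" "r2 < r1" and m: "m > 0" and n: "n1 \<le> m" "m \<le> n2"
    and x: "0 \<le> x" "x \<le> real m"
  shows "worst_ratio m True x r1 r2 n1 n2 \<le> 1 - (r1 - r2) * max 0 (real n1 - x) / (r1 * m)"
proof -
  define I where "I = replicate n2 False @ replicate n1 True"
  have I: "I \<in> orders n1 n2" unfolding I_def by (rule orders_ne)
  obtain c1 K where e1: "prot_run m True x (replicate n2 False) (0, 0) = (c1, K)" by fastforce
  obtain b1 b2 where e2: "prot_run m True x (replicate n1 True) (c1, K) = (b1, b2)" by fastforce
  have g1: "c1 = 0" "K \<le> n2" "K \<le> m" using prot_run_basic[OF e1] by auto
  have g3: "real K < real m - x + 1" using prot_run_T3[OF e1] x by auto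
  have g4: "real K \<ge> real m - x" using prot_run_T4[OF e1] g1 n x by auto
  have h1: "b2 = K" "b1 \<le> n1" "b1 + K \<le> m" using prot_run_basic[OF e2] g1 by auto
  have h2: "b1 + K = m \<or> b1 = n1" using prot_run_T2[OF e2] g1 h1 by auto
  have e: "prot_run m True x I (0, 0) = (b1, K)" unfolding I_def prot_run_append e1 e2 h1(1) ..
  define L where "L = (r1 - r2) * max 0 (real n1 - x)"
  have L0: "L \<ge> 0" unfolding L_def using r by simp
  have "opt_val m r1 r2 n1 n2 - (r1 * b1 + r2 * K) \<ge> L"
  proof -
    have o: "opt_val m r1 r2 n1 n2 = r1 * n1 + r2 * (real m - n1)" unfolding opt_val_def using n
      by (simp add: of_nat_diff)
    from h2 show ?thesis
    proof
      assume full: "b1 + K = m"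
      then have bK: "real b1 = real m - real K" by (metis add_diff_cancel_right' of_nat_add add_diff_cancel_right)
      have "opt_val m r1 r2 n1 n2 - (r1 * b1 + r2 * K) = (r1 - r2) * (real n1 - real m + K)"
        unfolding o bK by (simp add: algebra_simps)
      moreover have "max 0 (real n1 - x) \<le> real n1 - real m + K" using g4 h1 full by auto
      ultimately show ?thesis unfolding L_def using r by (simp add: mult_left_mono)
    next
      assume b1: "b1 = n1"
      have "real n1 - x \<le> 0" using g4 h1 b1 by linarith
      then have "L = 0" unfolding L_def by simp
      have "opt_val m r1 r2 n1 n2 - (r1 * b1 + r2 * K) = r2 * (real m - n1 - K)"
        unfolding o b1 by (simp add: algebra_simps)
      moreover have "real m - n1 - K \<ge> 0" using h1 b1 by linarith
      ultimately show ?thesis using \<open>L = 0\<close> r by simp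
    qed
  qed
  then have "ratio (prot_reward m True x r1 r2 I) (opt_val m r1 r2 n1 n2) \<le> 1 - L / (r1 * m)"
    unfolding prot_reward_def e by (intro ratio_upper[OF r m n L0]) simp
  then show ?thesis using worst_le_ratio[OF r I, of m True x] unfolding L_def by simp
qed

lemma W2_upper:
  assumes r: "0 < r2" "r2 < r1" and m: "m > 0" and n: "n1 \<le> m" "m \<le> n2"
  shows "worst_ratio m False x r1 r2 n1 n2 \<le> 1 - (r1 - r2) * real n1 / (r1 * m)"
proof -
  define I where "I = replicate n2 False @ replicate n1 True"
  have I: "I \<in> orders n1 n2" unfolding I_def by (rule orders_ne)
  obtain c1 K where e1: "prot_run m False x (replicate n2 False) (0, 0) = (c1, K)" by fastforce
  note F = prot_run_F[OF e1]
  have g1: "c1 = 0" "K \<le> m" using F(1) by auto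
  have "K = m" using F(2) g1 n by auto
  have e2: "prot_run m False x (replicate n1 True) (c1, K) = (0, m)"
    using prot_run_full[of 0 m m False x] g1 \<open>K = m\<close> by simp
  have e: "prot_run m False x I (0, 0) = (0, m)" unfolding I_def prot_run_append e1 e2 ..
  define L where "L = (r1 - r2) * real n1"
  have L0: "L \<ge> 0" unfolding L_def using r by simp
  have o: "opt_val m r1 r2 n1 n2 = r1 * n1 + r2 * (real m - n1)" unfolding opt_val_def using n
    by (simp add: of_nat_diff)
  have "opt_val m r1 r2 n1 n2 - (r1 * 0 + r2 * m) \<ge> L" unfolding o L_def by (simp add: algebra_simps)
  then have "ratio (prot_reward m False x r1 r2 I) (opt_val m r1 r2 n1 n2) \<le> 1 - L / (r1 * m)"
    unfolding prot_reward_def e by (intro ratio_upper[OF r m n L0]) simp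
  then show ?thesis using worst_le_ratio[OF r I, of m False x] unfolding L_def by simp
qed


definition bw :: "real \<Rightarrow> nat \<Rightarrow> nat \<Rightarrow> real" where
  "bw p n k = real (n choose k) * p ^ k * (1 - p) ^ (n - k)"

definition bS :: "real \<Rightarrow> nat \<Rightarrow> (nat \<Rightarrow> real) \<Rightarrow> real" where
  "bS p n f = (\<Sum>k\<le>n. bw p n k * f k)"

lemma bS_expect: "p \<in> {0..1} \<Longrightarrow> measure_pmf.expectation (binomial_pmf n p) f = bS p n f"
  unfolding bS_def bw_def by (subst expectation_binomial_pmf') auto

lemma bS_rec: "bS p (Suc n) f = bS p n (\<lambda>k. p * f (Suc k) + (1 - p) * f k)"
proof -
  define q where "q = 1 - p"
  define g where "g k = real (n choose k) * p ^ k * q ^ (Suc n - k) * f k" for k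
  define S1 where "S1 = (\<Sum>k\<le>n. real (n choose k) * p ^ Suc k * q ^ (n - k) * f (Suc k))"
  define S2 where "S2 = (\<Sum>k\<le>n. real (n choose Suc k) * p ^ Suc k * q ^ (n - k) * f (Suc k))"
  have "bS p (Suc n) f = q ^ Suc n * f 0 + (\<Sum>k\<le>n. real (Suc n choose Suc k) * p ^ Suc k * q ^ (n - k) * f (Suc k))"
    unfolding bS_def bw_def q_def by (subst sum.atMost_Suc_shift) simp
  also have "\<dots> = q ^ Suc n * f 0 + S1 + S2"
    unfolding S1_def S2_def by (simp add: sum.distrib algebra_simps)
  finally have 1: "bS p (Suc n) f = q ^ Suc n * f 0 + S1 + S2" .
  have "q ^ Suc n * f 0 + S2 = (\<Sum>k\<le>Suc n. g k)"
    unfolding g_def S2_def by (subst sum.atMost_Suc_shift) simp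
  also have "(\<Sum>k\<le>Suc n. g k) = (\<Sum>k\<le>n. g k)" unfolding g_def by simp
  also have "\<dots> = (\<Sum>k\<le>n. q * (real (n choose k) * p ^ k * q ^ (n - k) * f k))"
    unfolding g_def by (intro sum.cong refl) (simp add: Suc_diff_le)
  finally have 2: "q ^ Suc n * f 0 + S2 = (\<Sum>k\<le>n. q * (real (n choose k) * p ^ k * q ^ (n - k) * f k))" .
  have "bS p (Suc n) f = S1 + (\<Sum>k\<le>n. q * (real (n choose k) * p ^ k * q ^ (n - k) * f k))"
    using 1 2 by simp
  also have "\<dots> = (\<Sum>k\<le>n. real (n choose k) * p ^ Suc k * q ^ (n - k) * f (Suc k) + q * (real (n choose k) * p ^ k * q ^ (n - k) * f k))"
    unfolding S1_def by (simp add: sum.distrib)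
  also have "\<dots> = bS p n (\<lambda>k. p * f (Suc k) + (1 - p) * f k)"
    unfolding bS_def bw_def q_def by (intro sum.cong refl) (simp add: algebra_simps)
  finally show ?thesis .
qed

lemma bS_cong: "(\<And>k. f k = g k) \<Longrightarrow> bS p n f = bS p n g"
  by metis

lemma bS_add: "bS p n (\<lambda>k. f k + g k) = bS p n f + bS p n g"
  unfolding bS_def by (simp add: sum.distrib algebra_simps)
lemma bS_cmult: "bS p n (\<lambda>k. c * f k) = c * bS p n f"
  unfolding bS_def by (simp add: sum_distrib_left algebra_simps)
lemma bS_const: "bS p n (\<lambda>k. c) = c"
proof -
  have "(\<Sum>k\<le>n. bw p n k) = (p + (1 - p)) ^ n"
    unfolding bw_def by (subst binomial_ring) (simp add: atLeast0AtMost mult.commute mult.left_commute)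
  then show ?thesis unfolding bS_def by (simp flip: sum_distrib_right)
qed
lemma bS_mono: "p \<in> {0..1} \<Longrightarrow> (\<And>k. k \<le> n \<Longrightarrow> f k \<le> g k) \<Longrightarrow> bS p n f \<le> bS p n g"
  unfolding bS_def bw_def by (intro sum_mono mult_left_mono) auto

lemma bS_m1: "bS p n (\<lambda>k. real k - n * p) = 0"
proof (induction n)
  case 0 then show ?case unfolding bS_def bw_def by simp
next
  case (Suc n)
  have "bS p (Suc n) (\<lambda>k. real k - Suc n * p) = bS p n (\<lambda>k. real k - n * p)"
    unfolding bS_rec by (intro bS_cong) (simp add: algebra_simps)
  then show ?case using Suc by simp
qed

lemma bS_m2: "bS p n (\<lambda>k. (real k - n * p)^2) = n * p * (1 - p)"
proof (induction n)
  case 0 then show ?case unfolding bS_def bw_def by simp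
next
  case (Suc n)
  have "bS p (Suc n) (\<lambda>k. (real k - Suc n * p)^2)
     = bS p n (\<lambda>k. (real k - n * p)^2 + p * (1 - p))"
    unfolding bS_rec by (intro bS_cong) (simp add: algebra_simps power2_eq_square)
  also have "\<dots> = n * p * (1 - p) + p * (1 - p)"
    using Suc by (simp add: bS_add bS_cmult bS_const)
  finally show ?case by (simp add: algebra_simps)
qed

lemma bS_m4: "bS p n (\<lambda>k. (real k - n * p)^4) = 3 * (n * p * (1 - p))^2 + n * p * (1 - p) * (1 - 6 * p * (1 - p))"
proof (induction n)
  case 0 then show ?case unfolding bS_def bw_def by simp
next
  case (Suc n)
  define q where "q = 1 - p"
  have e: "p * (y + q) ^ 4 + q * (y - p) ^ 4 = y ^ 4 + 6 * p * q * y^2 + 4 * p * q * (q - p) * y + p * q * (1 - 3 * p * q)" for y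
    unfolding q_def by (simp add: algebra_simps power2_eq_square power4_eq_xxxx)
  have "bS p (Suc n) (\<lambda>k. (real k - Suc n * p)^4)
     = bS p n (\<lambda>k. p * ((real k - n * p) + q) ^ 4 + q * ((real k - n * p) - p) ^ 4)"
    unfolding bS_rec by (intro bS_cong) (simp add: q_def algebra_simps)
  also have "\<dots> = bS p n (\<lambda>k. (real k - n * p) ^ 4 + (6 * p * q * (real k - n * p)^2 + (4 * p * q * (q - p) * (real k - n * p) + p * q * (1 - 3 * p * q))))"
    by (simp only: e add.assoc)
  also have "\<dots> = (3 * (n * p * q)^2 + n * p * q * (1 - 6 * p * q)) + (6 * p * q * (n * p * q) + (0 + p * q * (1 - 3 * p * q)))"
    using Suc bS_m1[of p n] bS_m2[of p n] unfolding q_def by (simp add: bS_add bS_cmult bS_const)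
  finally show ?case unfolding q_def by (simp add: algebra_simps power2_eq_square)
qed


lemma abs_poly_lower:
  fixes y a :: real assumes a: "a > 0"
  shows "\<bar>y\<bar> \<ge> 3 * y^2 / (2 * a) - y^4 / (2 * a^3)"
proof -
  define t where "t = \<bar>y\<bar>"
  have t0: "t \<ge> 0" unfolding t_def by simp
  have y2: "y^2 = t^2" and y4: "y^4 = t^4" unfolding t_def by (simp_all add: power_even_abs_numeral)
  have "2 * a^3 * t - 3 * a^2 * t^2 + t^4 = t * (t - a)^2 * (t + 2 * a)"
    by (simp add: algebra_simps power2_eq_square power3_eq_cube power4_eq_xxxx)
  also have "\<dots> \<ge> 0" using t0 a by simp
  finally have "2 * a^3 * t - 3 * a^2 * t^2 + t^4 \<ge> 0" .
  then have "3 * t^2 / (2 * a) - t^4 / (2 * a^3) \<le> t" using a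
    by (simp add: field_simps power2_eq_square power3_eq_cube power4_eq_xxxx)
  then show ?thesis unfolding y2 y4 t_def by simp
qed

lemma abs_le_sq: fixes y a :: real assumes "a > 0" shows "\<bar>y\<bar> \<le> (y^2 / a + a) / 2"
proof -
  have "0 \<le> (\<bar>y\<bar> - a)^2" by simp
  then have "2 * a * \<bar>y\<bar> \<le> y^2 + a^2" by (simp add: algebra_simps power2_eq_square)
  then show ?thesis using assms by (simp add: field_simps power2_eq_square)
qed

lemma min_diff_le: fixes u v M :: real shows "\<bar>min M u - min M v\<bar> \<le> \<bar>u - v\<bar>"
  by (simp add: min_def abs_if)

lemma bS_nonneg: "p \<in> {0..1} \<Longrightarrow> (\<And>k. k \<le> n \<Longrightarrow> f k \<ge> 0) \<Longrightarrow> bS p n f \<ge> 0"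
  using bS_mono[of p n "\<lambda>_. 0" f] bS_const[of p n 0] by simp

lemma D_bound:
  fixes p :: real and m h :: nat
  assumes p: "0 < p" "p < 1" and m: "m > 0"
  shows "bS p h (\<lambda>s. \<bar>min (real m) (real s * (1 - p) / p) - real (min (h - s) m)\<bar>)
           \<le> (1 + 1 / p) * sqrt m + 2 / (min p (1 - p))^2"
proof -
  define q where "q = 1 - p"
  have q: "0 < q" "q < 1" unfolding q_def using p by auto
  have pp: "p \<in> {0..1}" using p by auto
  define D where "D s = \<bar>min (real m) (real s * q / p) - real (min (h - s) m)\<bar>" for s
  have D0: "D s \<ge> 0" for s unfolding D_def by simp
  have sm: "sqrt m > 0" using m by simp
  show ?thesis
  proof (cases "real h \<le> 2 * m / q")
    case True
    have pt: "D s \<le> ((real s - h * p)^2 / sqrt m + sqrt m) / (2 * p)" if "s \<le> h" for s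
    proof -
      have "real (min (h - s) m) = min (real m) (real h - real s)" using that by (auto simp: of_nat_diff min_def)
      then have "D s \<le> \<bar>real s * q / p - (real h - real s)\<bar>" unfolding D_def by (simp add: min_diff_le)
      also have "real s * q / p - (real h - real s) = (real s - h * p) / p" using p unfolding q_def
        by (simp add: field_simps)
      also have "\<bar>(real s - h * p) / p\<bar> = \<bar>real s - h * p\<bar> / p" using p by simp
      also have "\<dots> \<le> ((real s - h * p)^2 / sqrt m + sqrt m) / 2 / p"
        using abs_le_sq[OF sm, of "real s - h * p"] p by (intro divide_right_mono) auto
      finally show ?thesis by simp
    qed
    have "bS p h D \<le> bS p h (\<lambda>s. (1 / (2 * p * sqrt m)) * (real s - h * p)^2 + sqrt m / (2 * p))"
      using pt sm p by (intro bS_mono pp) (simp add: field_simps)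
    also have "\<dots> = (1 / (2 * p * sqrt m)) * bS p h (\<lambda>s. (real s - h * p)^2) + sqrt m / (2 * p)"
      by (simp only: bS_add bS_cmult bS_const)
    also have "\<dots> = (1 / (2 * p * sqrt m)) * (h * p * q) + sqrt m / (2 * p)"
      by (simp only: bS_m2 q_def)
    also have "(1 / (2 * p * sqrt m)) * (h * p * q) \<le> sqrt m"
    proof -
      have "h * q \<le> 2 * m" using True q by (simp add: field_simps)
      then have "p * (h * q) \<le> p * (2 * m)" using p by (intro mult_left_mono) auto
      then have "h * p * q \<le> 2 * p * m" by (simp add: algebra_simps)
      also have "2 * p * m = 2 * p * sqrt m * sqrt m" by simp
      finally show ?thesis using p sm by (simp add: field_simps)
    qed
    finally have "bS p h D \<le> sqrt m + sqrt m / (2 * p)" by simp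
    also have "\<dots> \<le> (1 + 1 / p) * sqrt m" using p sm by (simp add: field_simps)
    finally have "bS p h D \<le> (1 + 1 / p) * sqrt m" .
    moreover have "0 \<le> 2 / (min p (1 - p))^2" by simp
    ultimately show ?thesis unfolding D_def q_def by linarith
  next
    case False
    define e where "e = min p q * h / 2"
    have mq: "m < q * h / 2" using False q by (simp add: field_simps)
    have h0: "h > 0" using mq m q by (cases h) auto
    have e0: "e > 0" unfolding e_def using h0 p q by simp
    have pt: "D s \<le> (m / e^2) * (real s - h * p)^2" if "s \<le> h" for s
    proof (cases "real s * q / p \<ge> m \<and> h - s \<ge> m")
      case True
      then have "D s = 0" unfolding D_def by simp
      then show ?thesis using e0 by simp
    next
      case False
      have a0: "real s * q / p \<ge> 0" using p q by simp
      have i1: "0 \<le> min (real m) (real s * q / p)" "min (real m) (real s * q / p) \<le> m" using a0 by auto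
      have i2: "0 \<le> real (min (h - s) m)" "real (min (h - s) m) \<le> m" by auto
      have Dm: "D s \<le> m" unfolding D_def using i1 i2 by linarith
      have "\<bar>real s - h * p\<bar> \<ge> e"
      proof (cases "real s * q / p < m")
        case True
        then have "real s < m * p / q" using p q by (simp add: field_simps)
        also have "\<dots> \<le> h * p / 2" using mq p q by (simp add: field_simps)
        finally have "h * p - real s \<ge> h * p / 2" by (simp add: mult.commute)
        moreover have "e \<le> p * h / 2" unfolding e_def using h0 by (simp add: mult_right_mono)
        ultimately show ?thesis by (simp add: algebra_simps)
      next
        case F2: False
        then have "h - s < m" using False by auto
        then have "real h - real s < m" using that by (simp add: of_nat_diff)
        moreover have "m < h / 2 - h * p / 2" using mq unfolding q_def by (simp add: algebra_simps)
        ultimately have "real s - h * p > h / 2 - h * p / 2" by linarith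
        moreover have "q * h / 2 = h / 2 - h * p / 2" unfolding q_def by (simp add: field_simps)
        ultimately have "real s - h * p > q * h / 2" by linarith
        moreover have "e \<le> q * h / 2" unfolding e_def using h0 by (simp add: mult_right_mono)
        ultimately show ?thesis by simp
      qed
      then have "e^2 \<le> (real s - h * p)^2" using e0 by (metis abs_ge_zero order_trans less_imp_le power2_abs power_mono)
      then have "1 \<le> (real s - h * p)^2 / e^2" using e0 by simp
      then have "real m * 1 \<le> real m * ((real s - h * p)^2 / e^2)" by (intro mult_left_mono) auto
      then show ?thesis using Dm by simp
    qed
    have "bS p h D \<le> bS p h (\<lambda>s. (m / e^2) * (real s - h * p)^2)" using pt by (intro bS_mono pp) auto
    also have "\<dots> = (m / e^2) * (h * p * q)" by (simp only: bS_cmult bS_m2 q_def)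
    also have "\<dots> = 4 * (m / h) * p * q / (min p q)^2" unfolding e_def using h0 p q
      by (simp add: field_simps power2_eq_square)
    also have "\<dots> \<le> 4 * (q / 2) * p * q / (min p q)^2"
    proof -
      have "m / h \<le> q / 2" using mq h0 by (simp add: field_simps)
      then show ?thesis using p q by (intro divide_right_mono mult_right_mono) auto
    qed
    also have "\<dots> \<le> 2 / (min p q)^2"
    proof -
      have "p * q \<le> 1" using p q by (intro mult_le_one) auto
      then have "p * q * q \<le> 1 * 1" using q by (intro mult_mono) auto
      then show ?thesis using p q by (intro divide_right_mono) (auto simp: algebra_simps)
    qed
    finally have "bS p h D \<le> 2 / (min p q)^2" .
    moreover have "0 \<le> (1 + 1 / p) * sqrt m" using p by simp
    ultimately show ?thesis unfolding D_def q_def by linarith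
  qed
qed


lemma N_bound:
  fixes p c :: real and h :: nat
  assumes p: "0 < p" "p < 1" and c: "c > 0"
  shows "bS p h (\<lambda>s. real (h - s) * exp (- c * s)) \<le> 2 / (c * p) + 4 * (1 - p) / p"
proof -
  have pp: "p \<in> {0..1}" using p by auto
  have pt: "real (h - s) * exp (- c * s) \<le> 2 / (c * p) + (4 / (p^2 * h)) * (real s - h * p)^2"
    if "s \<le> h" for s
  proof (cases "h = 0")
    case True then show ?thesis using that c p by simp
  next
    case False
    then have h0: "real h > 0" by simp
    have A: "real (h - s) * exp (- c * s) \<le> h * exp (- c * s)" using that by (intro mult_right_mono) auto
    have B: "(4 / (p^2 * h)) * (real s - h * p)^2 \<ge> 0" using p by simp
    show ?thesis
    proof (cases "real s \<ge> h * p / 2")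
      case True
      define y where "y = c * p * h / 2"
      have y0: "y > 0" unfolding y_def using c p h0 by simp
      have "exp (- c * s) \<le> exp (- y)" unfolding y_def using True c by (simp add: mult_left_mono mult.commute)
      then have "h * exp (- c * s) \<le> h * exp (- y)" by (intro mult_left_mono) auto
      also have "h * exp (- y) = (2 / (c * p)) * (y * exp (- y))" unfolding y_def using c p by simp
      also have "y * exp (- y) \<le> 1"
      proof -
        have "y \<le> exp y" using exp_ge_add_one_self[of y] by linarith
        then show ?thesis by (simp add: exp_minus field_simps)
      qed
      then have "(2 / (c * p)) * (y * exp (- y)) \<le> (2 / (c * p)) * 1" using c p by (intro mult_left_mono) auto
      finally have "h * exp (- c * s) \<le> 2 / (c * p)" by simp
      then show ?thesis using A B by linarith
    next
      case False
      then have "h * p - real s \<ge> h * p / 2" by (simp add: mult.commute)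
      moreover have "h * p / 2 \<ge> 0" using p by simp
      ultimately have "h * p / 2 \<le> \<bar>real s - h * p\<bar>" "0 \<le> h * p / 2" by linarith+
      then have "(h * p / 2)^2 \<le> \<bar>real s - h * p\<bar>^2" by (rule power_mono)
      then have "(h * p / 2)^2 \<le> (real s - h * p)^2" by simp
      then have "(4 / (p^2 * h)) * (h * p / 2)^2 \<le> (4 / (p^2 * h)) * (real s - h * p)^2"
        using p by (intro mult_left_mono) auto
      moreover have "(4 / (p^2 * h)) * (h * p / 2)^2 = h" using p h0 by (simp add: field_simps power2_eq_square)
      moreover have "real h * exp (- c * s) \<le> real h * 1" using c by (intro mult_left_mono) auto
      moreover have "2 / (c * p) \<ge> 0" using c p by simp
      ultimately show ?thesis using A by linarith
    qed
  qed
  have "bS p h (\<lambda>s. real (h - s) * exp (- c * s)) \<le> bS p h (\<lambda>s. 2 / (c * p) + (4 / (p^2 * h)) * (real s - h * p)^2)"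
    using pt by (intro bS_mono pp) auto
  also have "\<dots> = 2 / (c * p) + (4 / (p^2 * h)) * bS p h (\<lambda>s. (real s - h * p)^2)"
    by (simp only: bS_add bS_cmult bS_const)
  also have "\<dots> = 2 / (c * p) + (4 / (p^2 * h)) * (h * p * (1 - p))" by (simp only: bS_m2)
  also have "\<dots> \<le> 2 / (c * p) + 4 * (1 - p) / p"
    using p by (cases "h = 0") (auto simp: field_simps power2_eq_square)
  finally show ?thesis .
qed

lemma G_bound:
  fixes p :: real and h :: nat
  assumes p: "0 < p" "p < 1" and V: "h * p * (1 - p) \<ge> 1"
  shows "bS p h (\<lambda>s. max 0 ((h * p - real s) / p)) \<ge> sqrt (h * p * (1 - p)) / (4 * p)"
proof -
  define V where "V = h * p * (1 - p)"
  define \<sigma> where "\<sigma> = sqrt V"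
  have V1: "V \<ge> 1" using V unfolding V_def by simp
  have s1: "\<sigma> \<ge> 1" unfolding \<sigma>_def using V1 by simp
  have sV: "\<sigma>^2 = V" unfolding \<sigma>_def using V1 by simp
  define a where "a = 2 * \<sigma>"
  have a0: "a > 0" unfolding a_def using s1 by simp
  have pp: "p \<in> {0..1}" using p by auto
  have pt: "max 0 ((h * p - real s) / p) \<ge>
      (1 / (2 * p)) * ((3 / (2 * a)) * (real s - h * p)^2 + (- 1 / (2 * a^3)) * (real s - h * p)^4
         + (- 1) * (real s - h * p))" for s
  proof -
    define Y where "Y = real s - h * p"
    have "max 0 ((h * p - real s) / p) = (\<bar>Y\<bar> - Y) / (2 * p)" unfolding Y_def using p
      by (auto simp: max_def field_simps abs_if)
    moreover have "\<bar>Y\<bar> - Y \<ge> 3 * Y^2 / (2 * a) - Y^4 / (2 * a^3) - Y" using abs_poly_lower[OF a0, of Y] by simp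
    ultimately show ?thesis unfolding Y_def[symmetric] using p
      by (simp add: field_simps divide_right_mono)
  qed
  have "bS p h (\<lambda>s. max 0 ((h * p - real s) / p)) \<ge> bS p h (\<lambda>s.
      (1 / (2 * p)) * ((3 / (2 * a)) * (real s - h * p)^2 + (- 1 / (2 * a^3)) * (real s - h * p)^4
         + (- 1) * (real s - h * p)))" using pt by (intro bS_mono pp) auto
  also have "bS p h (\<lambda>s.
      (1 / (2 * p)) * ((3 / (2 * a)) * (real s - h * p)^2 + (- 1 / (2 * a^3)) * (real s - h * p)^4
         + (- 1) * (real s - h * p))) = (1 / (2 * p)) * ((3 / (2 * a)) * V + (- 1 / (2 * a^3)) * (3 * V^2 + V * (1 - 6 * p * (1 - p))) + (-1) * 0)"
    unfolding V_def by (simp only: bS_add bS_cmult bS_m1 bS_m2 bS_m4)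
  finally have 1: "bS p h (\<lambda>s. max 0 ((h * p - real s) / p)) \<ge>
      (1 / (2 * p)) * ((3 / (2 * a)) * V - (3 * V^2 + V * (1 - 6 * p * (1 - p))) / (2 * a^3))" by simp
  have "(3 * V^2 + V * (1 - 6 * p * (1 - p))) / (2 * a^3) \<le> (3 * V^2 + V) / (2 * a^3)"
    using V1 p a0 by (intro divide_right_mono) (auto simp: mult_nonneg_nonneg)
  also have "\<dots> = 3 * \<sigma> / 16 + 1 / (16 * \<sigma>)" unfolding a_def sV[symmetric] using s1
    by (simp add: field_simps power2_eq_square power3_eq_cube)
  finally have 2: "(3 * V^2 + V * (1 - 6 * p * (1 - p))) / (2 * a^3) \<le> 3 * \<sigma> / 16 + 1 / (16 * \<sigma>)" .
  have 3: "(3 / (2 * a)) * V = 3 * \<sigma> / 4" unfolding a_def sV[symmetric] using s1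
    by (simp add: field_simps power2_eq_square)
  have 4: "1 / (16 * \<sigma>) \<le> \<sigma> / 16" using s1 mult_mono[of 1 \<sigma> 1 \<sigma>] by (simp add: field_simps)
  have "(3 / (2 * a)) * V - (3 * V^2 + V * (1 - 6 * p * (1 - p))) / (2 * a^3) \<ge> \<sigma> / 2"
    using 2 3 4 by linarith
  then have "(1 / (2 * p)) * ((3 / (2 * a)) * V - (3 * V^2 + V * (1 - 6 * p * (1 - p))) / (2 * a^3))
      \<ge> (1 / (2 * p)) * (\<sigma> / 2)" using p by (intro mult_left_mono) auto
  then show ?thesis using 1 unfolding \<sigma>_def V_def by (simp add: field_simps)
qed


lemma est_sets[measurable_cong]: "sets (est_measure t r) = sets borel"
  unfolding est_measure_def by auto

lemma est_space[simp]: "space (est_measure t r) = UNIV"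
  using sets_eq_imp_space_eq[OF est_sets] by simp

lemma est_prob: assumes "r \<in> {0..1}" shows "prob_space (est_measure t r)"
proof (cases "t = 0")
  case True
  then show ?thesis unfolding est_measure_def by (auto intro!: prob_space_uniform_measure)
next
  case False
  then show ?thesis unfolding est_measure_def
    by (auto intro!: measure_pmf.prob_space_distr)
qed

lemma est_le:
  assumes r: "r \<in> {0..1}" and d: "\<delta> \<ge> 0"
  shows "measure (est_measure t r) {z. z \<le> r - \<delta>} \<le> exp (- 2 * real t * \<delta>^2)"
proof (cases "t = 0")
  case True
  interpret prob_space "est_measure t r" using est_prob[OF r] .
  show ?thesis using True prob_le_1[of "{z. z \<le> r - \<delta>}"] by simp
next
  case False
  have "measure (est_measure t r) {z. z \<le> r - \<delta>}
      = measure_pmf.prob (binomial_pmf t r) {x. real x / real t \<le> r - \<delta>}"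
    unfolding est_measure_def using False by (simp add: measure_distr vimage_def)
  also have "\<dots> \<le> exp (- 2 * real t * \<delta>^2)"
    using binomial_distribution.prob_le'[of r t \<delta>] r d False by (simp add: binomial_distribution_def)
  finally show ?thesis .
qed

lemma est_ge:
  assumes r: "r \<in> {0..1}" and d: "\<delta> \<ge> 0"
  shows "measure (est_measure t r) {z. z \<ge> r + \<delta>} \<le> exp (- 2 * real t * \<delta>^2)"
proof (cases "t = 0")
  case True
  interpret prob_space "est_measure t r" using est_prob[OF r] .
  show ?thesis using True prob_le_1[of "{z. z \<ge> r + \<delta>}"] by simp
next
  case False
  have "measure (est_measure t r) {z. z \<ge> r + \<delta>}
      = measure_pmf.prob (binomial_pmf t r) {x. real x / real t \<ge> r + \<delta>}"
    unfolding est_measure_def using False by (simp add: measure_distr vimage_def)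
  also have "\<dots> \<le> exp (- 2 * real t * \<delta>^2)"
    using binomial_distribution.prob_ge'[of r t \<delta>] r d False by (simp add: binomial_distribution_def)
  finally show ?thesis .
qed


lemma pair_est:
  assumes r: "r1 \<in> {0..1}" "r2 \<in> {0..1}"
  shows "pair_prob_space (est_measure t1 r1) (est_measure t2 r2)"
proof -
  interpret N1: prob_space "est_measure t1 r1" using est_prob[OF r(1)] .
  interpret N2: prob_space "est_measure t2 r2" using est_prob[OF r(2)] .
  show ?thesis by unfold_locales
qed

lemma pair_if_integral:
  fixes ta tb :: nat and ra rb mid a b :: real
  assumes r: "ra \<in> {0..1}" "rb \<in> {0..1}"
  defines "M \<equiv> est_measure ta ra \<Otimes>\<^sub>M est_measure tb rb"
  defines "P \<equiv> measure M {z. snd z < fst z}"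
  shows "integral\<^sup>L M (\<lambda>z. if fst z > snd z then a else b) = a * P + b * (1 - P)"
    "0 \<le> P" "P \<le> 1"
    "1 - P \<le> measure (est_measure ta ra) {z. z \<le> mid} + measure (est_measure tb rb) {z. z \<ge> mid}"
proof -
  interpret pair_prob_space "est_measure ta ra" "est_measure tb rb" using pair_est[OF r] .
  have spM: "space M = UNIV" unfolding M_def by (simp add: space_pair_measure)
  have setsM: "sets M = sets (borel \<Otimes>\<^sub>M borel)" unfolding M_def
    by (intro sets_pair_measure_cong est_sets)
  have Sm: "{z. snd z < fst z} \<in> sets M"
  proof -
    have "{z \<in> space (borel \<Otimes>\<^sub>M borel). snd z < (fst z :: real)} \<in> sets (borel \<Otimes>\<^sub>M borel)" by measurable
    then show ?thesis using setsM by (simp add: space_pair_measure)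
  qed
  have Cm: "{z. \<not> snd z < fst z} \<in> sets M"
  proof -
    have "{z \<in> space (borel \<Otimes>\<^sub>M borel). \<not> snd z < (fst z :: real)} \<in> sets (borel \<Otimes>\<^sub>M borel)" by measurable
    then show ?thesis using setsM by (simp add: space_pair_measure)
  qed
  have f: "(\<lambda>z. if fst z > snd z then a else b) = (\<lambda>z. a * indicator {z. snd z < fst z} z + b * indicator {z. \<not> snd z < fst z} z)"
    by (auto simp: indicator_def)
  have compl: "measure M {z. \<not> snd z < fst z} = 1 - P"
  proof -
    have "{z. \<not> snd z < fst z} = space M - {z. snd z < fst z}" using spM by auto
    then show ?thesis unfolding P_def M_def using prob_compl[OF Sm[unfolded M_def]] by simp
  qed
  show "integral\<^sup>L M (\<lambda>z. if fst z > snd z then a else b) = a * P + b * (1 - P)"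
  proof -
    have fin: "emeasure M A < \<infinity>" for A unfolding M_def by (simp add: less_top[symmetric])
    have i1: "integrable M (\<lambda>z. a * indicator {z. snd z < fst z} z)"
      using Sm fin by (intro integrable_mult_right integrable_real_indicator) auto
    have i2: "integrable M (\<lambda>z. b * indicator {z. \<not> snd z < fst z} z)"
      using Cm fin by (intro integrable_mult_right integrable_real_indicator) auto
    have "integral\<^sup>L M (\<lambda>z. a * indicator {z. snd z < fst z} z + b * indicator {z. \<not> snd z < fst z} z)
      = integral\<^sup>L M (\<lambda>z. a * indicator {z. snd z < fst z} z) + integral\<^sup>L M (\<lambda>z. b * indicator {z. \<not> snd z < fst z} z)"
      using Bochner_Integration.integral_add[OF i1 i2] by simp
    also have "\<dots> = a * P + b * (1 - P)" using compl spM unfolding P_def by simp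
    finally show ?thesis unfolding f .
  qed
  show "0 \<le> P" unfolding P_def by simp
  show "P \<le> 1" unfolding P_def M_def by (rule prob_le_1)
  have sub: "{z. \<not> snd z < fst z} \<subseteq> ({z. z \<le> mid} \<times> UNIV) \<union> (UNIV \<times> {z. z \<ge> mid})" by auto
  have A1: "{z :: real. z \<le> mid} \<in> sets (est_measure ta ra)" using est_sets by (simp add: est_sets)
  have A2: "{z :: real. z \<ge> mid} \<in> sets (est_measure tb rb)" using est_sets by (simp add: est_sets)
  have R1: "{z. z \<le> mid} \<times> UNIV \<in> sets M" unfolding M_def using A1 by (auto intro!: pair_measureI)
  have R2: "UNIV \<times> {z. z \<ge> mid} \<in> sets M" unfolding M_def using A2 by (auto intro!: pair_measureI)
  have m1: "measure M ({z. z \<le> mid} \<times> UNIV) = measure (est_measure ta ra) {z. z \<le> mid}"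
  proof -
    have "emeasure M ({z. z \<le> mid} \<times> UNIV) = emeasure (est_measure ta ra) {z. z \<le> mid} * emeasure (est_measure tb rb) UNIV"
      unfolding M_def using A1 by (intro M2.emeasure_pair_measure_Times) (auto simp: est_sets)
    also have "emeasure (est_measure tb rb) UNIV = 1" using M2.emeasure_space_1 by simp
    finally show ?thesis unfolding measure_def by simp
  qed
  have m2: "measure M (UNIV \<times> {z. z \<ge> mid}) = measure (est_measure tb rb) {z. z \<ge> mid}"
  proof -
    have "emeasure M (UNIV \<times> {z. z \<ge> mid}) = emeasure (est_measure ta ra) UNIV * emeasure (est_measure tb rb) {z. z \<ge> mid}"
      unfolding M_def using A2 by (intro M2.emeasure_pair_measure_Times) (auto simp: est_sets)
    also have "emeasure (est_measure ta ra) UNIV = 1" using M1.emeasure_space_1 by simp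
    finally show ?thesis unfolding measure_def by simp
  qed
  have "measure M {z. \<not> snd z < fst z} \<le> measure M (({z. z \<le> mid} \<times> UNIV) \<union> (UNIV \<times> {z. z \<ge> mid}))"
    unfolding M_def using sub R1 R2 by (intro finite_measure_mono) (auto simp: M_def)
  also have "\<dots> \<le> measure M ({z. z \<le> mid} \<times> UNIV) + measure M (UNIV \<times> {z. z \<ge> mid})"
    using R1 R2 by (intro measure_subadditive) (auto simp: M_def)
  finally show "1 - P \<le> measure (est_measure ta ra) {z. z \<le> mid} + measure (est_measure tb rb) {z. z \<ge> mid}"
    using compl m1 m2 by simp
qed


lemma test_alloc_ge:
  "fst (test_alloc mt s1 s2) \<ge> min s1 (mt div 2)" "snd (test_alloc mt s1 s2) \<ge> min s2 (mt div 2)"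
  unfolding test_alloc_def by auto

lemma exp_min_le: assumes "c > 0" "t \<ge> min s M"
  shows "exp (- c * real t) \<le> exp (- c * real s) + exp (- c * real M)"
proof -
  have "exp (- c * real t) \<le> exp (- c * real (min s M))" using assms by simp
  also have "\<dots> \<le> exp (- c * real s) + exp (- c * real M)" by (cases "s \<le> M") (auto simp: min_def)
  finally show ?thesis .
qed

lemma alg_repr:
  fixes m mt h l s1 s2 :: nat and p r1 r2 :: real
  assumes r: "0 < r2" "r2 < r1" "r1 < 1"
  defines "t1 \<equiv> fst (test_alloc mt s1 s2)" and "t2 \<equiv> snd (test_alloc mt s1 s2)"
  defines "W1 \<equiv> worst_ratio m True (min (real m) (real s1 * (1 - p) / p)) r1 r2 (h - s1) (l - s2)"
  defines "W2 \<equiv> worst_ratio m False (min (real m) (real s2 * (1 - p) / p)) r1 r2 (h - s1) (l - s2)"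
  obtains P where "alg_value m mt p r1 r2 h l s1 s2 = W1 * P + W2 * (1 - P)" "0 \<le> P" "P \<le> 1"
    "1 - P \<le> exp (- ((r1 - r2)^2 / 2) * t1) + exp (- ((r1 - r2)^2 / 2) * t2)"
proof -
  have rr: "r1 \<in> {0..1}" "r2 \<in> {0..1}" using r by auto
  note PI = pair_if_integral(1)[OF rr, where ta=t1 and tb=t2 and a=W1 and b=W2]
    pair_if_integral(2,3)[OF rr, where ta=t1 and tb=t2]
    pair_if_integral(4)[OF rr, where ta=t1 and tb=t2 and mid="(r1 + r2) / 2"]
  have av: "alg_value m mt p r1 r2 h l s1 s2 = integral\<^sup>L (est_measure t1 r1 \<Otimes>\<^sub>M est_measure t2 r2) (\<lambda>z. if fst z > snd z then W1 else W2)"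
    unfolding alg_value_def t1_def t2_def W1_def W2_def Let_def by simp
  define P where "P = measure (est_measure t1 r1 \<Otimes>\<^sub>M est_measure t2 r2) {z. snd z < fst z}"
  have d: "(r1 - r2) / 2 \<ge> 0" using r by simp
  have e1: "measure (est_measure t1 r1) {z. z \<le> (r1 + r2) / 2} \<le> exp (- ((r1 - r2)^2 / 2) * t1)"
  proof -
    have x1: "r1 - (r1 - r2) / 2 = (r1 + r2) / 2" by (simp add: field_simps)
    have x2: "- 2 * real t1 * ((r1 - r2) / 2)^2 = - ((r1 - r2)^2 / 2) * t1" by (simp add: power2_eq_square)
    show ?thesis using est_le[OF rr(1) d, of t1] unfolding x1 x2 .
  qed
  have e2: "measure (est_measure t2 r2) {z. z \<ge> (r1 + r2) / 2} \<le> exp (- ((r1 - r2)^2 / 2) * t2)"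
  proof -
    have x1: "r2 + (r1 - r2) / 2 = (r1 + r2) / 2" by (simp add: field_simps)
    have x2: "- 2 * real t2 * ((r1 - r2) / 2)^2 = - ((r1 - r2)^2 / 2) * t2" by (simp add: power2_eq_square)
    show ?thesis using est_ge[OF rr(2) d, of t2] unfolding x1 x2 .
  qed
  show ?thesis
    apply (rule that[of P])
    using PI e1 e2 av unfolding P_def by auto
qed

lemma alg_range:
  assumes r: "0 < r2" "r2 < r1" "r1 < 1"
  shows "0 \<le> alg_value m mt p r1 r2 h l s1 s2" "alg_value m mt p r1 r2 h l s1 s2 \<le> 1"
    "alg_value m mt p r1 r2 h l s1 s2 \<le> max (worst_ratio m True (min (real m) (real s1 * (1 - p) / p)) r1 r2 (h - s1) (l - s2))
                                             (worst_ratio m False (min (real m) (real s2 * (1 - p) / p)) r1 r2 (h - s1) (l - s2))"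
proof -
  obtain P where P: "alg_value m mt p r1 r2 h l s1 s2 = worst_ratio m True (min (real m) (real s1 * (1 - p) / p)) r1 r2 (h - s1) (l - s2) * P + worst_ratio m False (min (real m) (real s2 * (1 - p) / p)) r1 r2 (h - s1) (l - s2) * (1 - P)"
    "0 \<le> P" "P \<le> 1" using alg_repr[OF r] by metis
  define a where "a = worst_ratio m True (min (real m) (real s1 * (1 - p) / p)) r1 r2 (h - s1) (l - s2)"
  define b where "b = worst_ratio m False (min (real m) (real s2 * (1 - p) / p)) r1 r2 (h - s1) (l - s2)"
  have a: "0 \<le> a" "a \<le> 1" unfolding a_def using worst_ratio_range r by auto
  have b: "0 \<le> b" "b \<le> 1" unfolding b_def using worst_ratio_range r by auto
  have "0 \<le> a * P + b * (1 - P)" using a b P by simp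
  then show "0 \<le> alg_value m mt p r1 r2 h l s1 s2" using P(1) unfolding a_def b_def by simp
  have "a * P + b * (1 - P) \<le> max a b * P + max a b * (1 - P)"
    using P by (intro add_mono mult_right_mono) auto
  also have "\<dots> = max a b" by (simp add: algebra_simps)
  finally have "a * P + b * (1 - P) \<le> max a b" .
  then show "alg_value m mt p r1 r2 h l s1 s2 \<le> max a b" using P(1) unfolding a_def b_def by simp
  then show "alg_value m mt p r1 r2 h l s1 s2 \<le> 1" using a b by simp
qed


lemma alg_loss:
  fixes m mt h l s1 s2 :: nat and p r1 r2 :: real
  assumes r: "0 < r2" "r2 < r1" "r1 < 1" and p: "0 < p" "p < 1" and m: "m > 0"
  defines "c \<equiv> (r1 - r2)^2 / 2" and "C \<equiv> 2 + 2 * r1 / r2"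
  defines "D1 \<equiv> \<bar>min (real m) (real s1 * (1 - p) / p) - real (min (h - s1) m)\<bar>"
  defines "D2 \<equiv> \<bar>min (real m) (real s2 * (1 - p) / p) - real (min (l - s2) m)\<bar>"
  shows "1 - alg_value m mt p r1 r2 h l s1 s2 \<le> C * (D1 + D2 + 2) / m
     + C * (real (h - s1) * exp (- c * s1) + real (l - s2) * exp (- c * s2)) / m + 2 * exp (- c * real (mt div 2))"
proof -
  define t1 where "t1 = fst (test_alloc mt s1 s2)"
  define t2 where "t2 = snd (test_alloc mt s1 s2)"
  define x1 where "x1 = min (real m) (real s1 * (1 - p) / p)"
  define x2 where "x2 = min (real m) (real s2 * (1 - p) / p)"
  define W1 where "W1 = worst_ratio m True x1 r1 r2 (h - s1) (l - s2)"
  define W2 where "W2 = worst_ratio m False x2 r1 r2 (h - s1) (l - s2)"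
  define n1 where "n1 = h - s1"
  define n2 where "n2 = l - s2"
  define M where "M = mt div 2"
  obtain P where P: "alg_value m mt p r1 r2 h l s1 s2 = W1 * P + W2 * (1 - P)" "0 \<le> P" "P \<le> 1"
    "1 - P \<le> exp (- c * t1) + exp (- c * t2)"
    using alg_repr[OF r] unfolding W1_def W2_def x1_def x2_def t1_def t2_def c_def by metis
  have c0: "c > 0" unfolding c_def using r by simp
  have x1r: "0 \<le> x1" "x1 \<le> m" unfolding x1_def using p by auto
  have x2r: "0 \<le> x2" "x2 \<le> m" unfolding x2_def using p by auto
  have C0: "C \<ge> 0" unfolding C_def using r by simp
  have u: "1 - W1 \<le> C * (D1 + 1) / m"
    using W1_lower[OF r(1,2) m x1r, of "h - s1" "l - s2"] unfolding W1_def C_def D1_def x1_def by simp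
  have u0: "0 \<le> 1 - W1" using worst_ratio_range r unfolding W1_def by auto
  have v1: "1 - W2 \<le> C * (real (min n1 n2) + D2 + 1) / m"
    using W2_lower[OF r(1,2) m x2r, of "h - s1" "l - s2"] unfolding W2_def C_def D2_def x2_def n1_def n2_def by simp
  have v0: "0 \<le> 1 - W2" "1 - W2 \<le> 1" using worst_ratio_range r unfolding W2_def by auto
  define w where "w = min 1 (C * real (min n1 n2) / m)"
  have w0: "0 \<le> w" "w \<le> 1" unfolding w_def using C0 by auto
  have D20: "D2 \<ge> 0" unfolding D2_def by simp
  have v: "1 - W2 \<le> C * (D2 + 1) / m + w"
  proof (cases "C * real (min n1 n2) / m \<le> 1")
    case True
    then have "w = C * real (min n1 n2) / m" unfolding w_def by simp
    then show ?thesis using v1 by (simp add: add_divide_distrib distrib_left)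
  next
    case False
    then have "w = 1" unfolding w_def by simp
    moreover have "C * (D2 + 1) / m \<ge> 0" using C0 D20 by simp
    ultimately show ?thesis using v0 by linarith
  qed
  have "1 - alg_value m mt p r1 r2 h l s1 s2 = (1 - W1) * P + (1 - W2) * (1 - P)"
    using P(1) by (simp add: algebra_simps)
  also have "\<dots> \<le> (1 - W1) * 1 + (1 - W2) * (1 - P)"
    using u0 v0 P by (intro add_mono mult_left_mono) auto
  also have "(1 - W2) * (1 - P) \<le> (C * (D2 + 1) / m + w) * (1 - P)"
    using v P by (intro mult_right_mono) auto
  also have "\<dots> \<le> C * (D2 + 1) / m * 1 + w * (exp (- c * t1) + exp (- c * t2))"
    unfolding distrib_right using P C0 D20 w0 by (intro add_mono mult_left_mono) auto
  also have "w * (exp (- c * t1) + exp (- c * t2)) \<le>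
      w * ((exp (- c * s1) + exp (- c * M)) + (exp (- c * s2) + exp (- c * M)))"
    using exp_min_le[OF c0 test_alloc_ge(1)[of s1 mt s2]] exp_min_le[OF c0 test_alloc_ge(2)[of s2 mt s1]] w0
    unfolding t1_def t2_def M_def by (intro mult_left_mono add_mono) auto
  also have "\<dots> = w * exp (- c * s1) + w * exp (- c * s2) + 2 * (w * exp (- c * M))"
    by (simp add: algebra_simps)
  also have "w * exp (- c * s1) \<le> (C * n1 / m) * exp (- c * s1)"
  proof -
    have "w \<le> C * n1 / m" unfolding w_def using C0 m
      by (intro min.coboundedI2 divide_right_mono mult_left_mono) auto
    then show ?thesis by (intro mult_right_mono) auto
  qed
  also have "w * exp (- c * s2) \<le> (C * n2 / m) * exp (- c * s2)"
  proof -
    have "w \<le> C * n2 / m" unfolding w_def using C0 m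
      by (intro min.coboundedI2 divide_right_mono mult_left_mono) auto
    then show ?thesis by (intro mult_right_mono) auto
  qed
  also have "w * exp (- c * M) \<le> 1 * exp (- c * M)" using w0 by (intro mult_right_mono) auto
  finally have "1 - alg_value m mt p r1 r2 h l s1 s2 \<le> (1 - W1) + C * (D2 + 1) / m +
     ((C * n1 / m) * exp (- c * s1) + (C * n2 / m) * exp (- c * s2) + 2 * exp (- c * M))" by simp
  also have "\<dots> \<le> C * (D1 + 1) / m + C * (D2 + 1) / m +
     ((C * n1 / m) * exp (- c * s1) + (C * n2 / m) * exp (- c * s2) + 2 * exp (- c * M))"
    using u by simp
  also have "\<dots> = C * (D1 + D2 + 2) / m
     + C * (real (h - s1) * exp (- c * s1) + real (l - s2) * exp (- c * s2)) / m + 2 * exp (- c * real (mt div 2))"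
    unfolding n1_def n2_def M_def using m by (simp add: field_simps)
  finally show ?thesis .
qed


lemma pair_bin_integrable:
  assumes "p \<in> {0..1}"
  shows "integrable (measure_pmf (pair_pmf (binomial_pmf h p) (binomial_pmf l p))) (f :: nat \<times> nat \<Rightarrow> real)"
  using assms finite_set_pmf_binomial_pmf[of p h] finite_set_pmf_binomial_pmf[of p l]
  by (intro integrable_measure_pmf_finite) (auto simp: set_pair_pmf)

lemma E_upper:
  fixes m mt h l :: nat and p r1 r2 :: real
  assumes r: "0 < r2" "r2 < r1" "r1 < 1" and p: "0 < p" "p < 1" and m: "m > 0"
  defines "c \<equiv> (r1 - r2)^2 / 2" and "C \<equiv> 2 + 2 * r1 / r2"
  defines "K1 \<equiv> (1 + 1 / p) * sqrt m + 2 / (min p (1 - p))^2"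
  defines "K2 \<equiv> 2 / (c * p) + 4 * (1 - p) / p"
  shows "measure_pmf.expectation (pair_pmf (binomial_pmf h p) (binomial_pmf l p))
            (\<lambda>s. alg_value m mt p r1 r2 h l (fst s) (snd s))
         \<ge> 1 - (C * (2 * K1 + 2) / m + 2 * C * K2 / m + 2 * exp (- c * real (mt div 2)))"
proof -
  define Q where "Q = pair_pmf (binomial_pmf h p) (binomial_pmf l p)"
  have pp: "p \<in> {0..1}" using p by auto
  have I: "integrable (measure_pmf Q) f" for f :: "nat \<times> nat \<Rightarrow> real"
    unfolding Q_def by (rule pair_bin_integrable[OF pp])
  define D where "D n s = \<bar>min (real m) (real s * (1 - p) / p) - real (min (n - s) m)\<bar>" for n s :: nat
  define N where "N n s = real (n - s) * exp (- c * s)" for n s :: nat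
  define a where "a = C / m"
  define b where "b = 2 * C / m + 2 * exp (- c * real (mt div 2))"
  have pt: "1 - alg_value m mt p r1 r2 h l (fst s) (snd s) \<le>
      (a * (D h (fst s) + N h (fst s)) + a * (D l (snd s) + N l (snd s))) + b" for s
  proof -
    have "1 - alg_value m mt p r1 r2 h l (fst s) (snd s) \<le> C * (D h (fst s) + D l (snd s) + 2) / m
     + C * (N h (fst s) + N l (snd s)) / m + 2 * exp (- c * real (mt div 2))"
      using alg_loss[OF r p m, of mt h l "fst s" "snd s"] unfolding D_def N_def c_def C_def by simp
    also have "\<dots> = (a * (D h (fst s) + N h (fst s)) + a * (D l (snd s) + N l (snd s))) + b"
      unfolding a_def b_def using m by (simp add: field_simps)
    finally show ?thesis .
  qed
  have "measure_pmf.expectation Q (\<lambda>s. 1 - alg_value m mt p r1 r2 h l (fst s) (snd s)) \<le>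
      measure_pmf.expectation Q (\<lambda>s. (a * (D h (fst s) + N h (fst s)) + a * (D l (snd s) + N l (snd s))) + b)"
    using pt I by (intro integral_mono) auto
  also have "\<dots> = measure_pmf.expectation Q (\<lambda>s. a * (D h (fst s) + N h (fst s)))
      + measure_pmf.expectation Q (\<lambda>s. a * (D l (snd s) + N l (snd s))) + b"
    using I by (simp add: Bochner_Integration.integral_add)
  also have "measure_pmf.expectation Q (\<lambda>s. a * (D h (fst s) + N h (fst s)))
      = measure_pmf.expectation (binomial_pmf h p) (\<lambda>s. a * (D h s + N h s))"
    unfolding Q_def by (rule expectation_pair_pmf_fst)
  also have "\<dots> = a * bS p h (\<lambda>s. D h s + N h s)"
    by (simp only: bS_expect[OF pp] bS_cmult)
  also have "measure_pmf.expectation Q (\<lambda>s. a * (D l (snd s) + N l (snd s)))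
      = measure_pmf.expectation (binomial_pmf l p) (\<lambda>s. a * (D l s + N l s))"
    unfolding Q_def by (rule expectation_pair_pmf_snd)
  also have "\<dots> = a * bS p l (\<lambda>s. D l s + N l s)"
    by (simp only: bS_expect[OF pp] bS_cmult)
  finally have 1: "measure_pmf.expectation Q (\<lambda>s. 1 - alg_value m mt p r1 r2 h l (fst s) (snd s))
      \<le> a * bS p h (\<lambda>s. D h s + N h s) + a * bS p l (\<lambda>s. D l s + N l s) + b" .
  have c0: "c > 0" unfolding c_def using r by simp
  have bnd: "bS p n (\<lambda>s. D n s + N n s) \<le> K1 + K2" for n
  proof -
    have "bS p n (\<lambda>s. D n s + N n s) = bS p n (D n) + bS p n (N n)" by (rule bS_add)
    also have "\<dots> \<le> K1 + K2"
      using D_bound[OF p m, of n] N_bound[OF p c0, of n] unfolding D_def N_def K1_def K2_def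
      by (intro add_mono) auto
    finally show ?thesis .
  qed
  have a0: "a \<ge> 0" unfolding a_def C_def using r by simp
  have "a * bS p h (\<lambda>s. D h s + N h s) + a * bS p l (\<lambda>s. D l s + N l s) + b \<le> a * (K1 + K2) + a * (K1 + K2) + b"
    using bnd a0 by (intro add_mono mult_left_mono) auto
  also have "\<dots> = C * (2 * K1 + 2) / m + 2 * C * K2 / m + 2 * exp (- c * real (mt div 2))"
    unfolding a_def b_def using m by (simp add: field_simps)
  finally have 2: "measure_pmf.expectation Q (\<lambda>s. 1 - alg_value m mt p r1 r2 h l (fst s) (snd s))
      \<le> C * (2 * K1 + 2) / m + 2 * C * K2 / m + 2 * exp (- c * real (mt div 2))" using 1 by linarith
  have "measure_pmf.expectation Q (\<lambda>s. 1 - alg_value m mt p r1 r2 h l (fst s) (snd s))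
      = 1 - measure_pmf.expectation Q (\<lambda>s. alg_value m mt p r1 r2 h l (fst s) (snd s))"
    using I by (simp add: Bochner_Integration.integral_diff prob_space.prob_space measure_pmf.prob_space_axioms)
  then show ?thesis using 2 unfolding Q_def by linarith
qed


lemma E_lower:
  fixes m h mt :: nat and p r1 r2 :: real
  assumes r: "0 < r2" "r2 < r1" "r1 < 1" and p: "0 < p" "p < 1" and m: "m > 0"
    and hm: "real h \<le> p * m" and hV: "h * p * (1 - p) \<ge> 1" and qm: "(1 - p) * m \<ge> 2"
  defines "k \<equiv> (r1 - r2) / r1"
  shows "measure_pmf.expectation (pair_pmf (binomial_pmf h p) (binomial_pmf (m^2) p))
            (\<lambda>s. alg_value m mt p r1 r2 h (m^2) (fst s) (snd s))
         \<le> 1 - k * (sqrt (h * p * (1 - p)) / (4 * p)) / m + k * (4 * p / ((1 - p) * m^2))"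
proof -
  define l where "l = m^2"
  define q where "q = 1 - p"
  have q: "0 < q" "q < 1" unfolding q_def using p by auto
  define e where "e = q * m^2 / 2"
  have e0: "e > 0" unfolding e_def using q m by simp
  define Q where "Q = pair_pmf (binomial_pmf h p) (binomial_pmf l p)"
  have pp: "p \<in> {0..1}" using p by auto
  have I: "integrable (measure_pmf Q) f" for f :: "nat \<times> nat \<Rightarrow> real"
    unfolding Q_def by (rule pair_bin_integrable[OF pp])
  define g where "g s = max 0 ((h * p - real s) / p)" for s :: nat
  have k0: "k \<ge> 0" unfolding k_def using r by simp
  have "p * real m \<le> real m" by (rule mult_left_le_one_le) (use p in auto)
  then have hm': "h \<le> m" using hm by linarith
  have gm: "g s \<le> m" for s
  proof -
    have "(h * p - real s) / p \<le> h" using p by (simp add: field_simps)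
    then show ?thesis unfolding g_def using hm' by simp
  qed
  have g0: "g s \<ge> 0" for s unfolding g_def by simp
  have hph: "real h * p \<le> real h" by (rule mult_right_le_one_le) (use p in auto)
  have gz: "g s = 0" if "\<not> s \<le> h" for s
  proof -
    have "real h * p - real s \<le> 0" using that hph by simp
    then have "(real h * p - real s) / p \<le> 0" using p by (simp add: divide_nonpos_pos)
    then show ?thesis unfolding g_def by simp
  qed
  have pt: "1 - alg_value m mt p r1 r2 h l s1 s2 \<ge> (k / m) * g s1 - (k / e^2) * (real s2 - l * p)^2" for s1 s2
  proof (cases "m \<le> l - s2")
    case True
    have n1m: "h - s1 \<le> m" using hm' by simp
    define x1 where "x1 = min (real m) (real s1 * (1 - p) / p)"
    have x1r: "0 \<le> x1" "x1 \<le> m" unfolding x1_def using p by auto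
    have W1: "worst_ratio m True x1 r1 r2 (h - s1) (l - s2) \<le> 1 - (r1 - r2) * max 0 (real (h - s1) - x1) / (r1 * m)"
      by (rule W1_upper[OF r(1,2) m n1m True x1r])
    have W2: "worst_ratio m False (min (real m) (real s2 * (1 - p) / p)) r1 r2 (h - s1) (l - s2) \<le> 1 - (r1 - r2) * real (h - s1) / (r1 * m)"
      by (rule W2_upper[OF r(1,2) m n1m True])
    have ga: "g s1 \<le> max 0 (real (h - s1) - x1)"
    proof (cases "s1 \<le> h")
      case True
      have "x1 \<le> real s1 * (1 - p) / p" unfolding x1_def by simp
      then have "real (h - s1) - x1 \<ge> (h * p - real s1) / p" using True p
        by (simp add: of_nat_diff field_simps)
      then show ?thesis unfolding g_def by simp
    next
      case False
      then have "g s1 = 0" by (rule gz)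
      then show ?thesis by simp
    qed
    have gb: "g s1 \<le> real (h - s1)"
    proof (cases "s1 \<le> h")
      case True
      have "real s1 * p \<le> real s1" by (rule mult_right_le_one_le) (use p in auto)
      then have "(h * p - real s1) / p \<le> real h - real s1" using p
        by (simp add: field_simps)
      then show ?thesis unfolding g_def using True by (simp add: of_nat_diff)
    next
      case False
      then have "g s1 = 0" by (rule gz)
      then show ?thesis by simp
    qed
    have kk: "(r1 - r2) * z / (r1 * m) = (k / m) * z" for z unfolding k_def by simp
    have "(k / m) * g s1 \<le> (k / m) * max 0 (real (h - s1) - x1)" using ga k0 m by (intro mult_left_mono) auto
    then have A1: "worst_ratio m True x1 r1 r2 (h - s1) (l - s2) \<le> 1 - (k / m) * g s1" using W1 kk by simp
    have "(k / m) * g s1 \<le> (k / m) * real (h - s1)" using gb k0 m by (intro mult_left_mono) auto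
    then have A2: "worst_ratio m False (min (real m) (real s2 * (1 - p) / p)) r1 r2 (h - s1) (l - s2) \<le> 1 - (k / m) * g s1"
      using W2 kk by simp
    have "max (worst_ratio m True x1 r1 r2 (h - s1) (l - s2)) (worst_ratio m False (min (real m) (real s2 * (1 - p) / p)) r1 r2 (h - s1) (l - s2)) \<le> 1 - (k / m) * g s1"
      using A1 A2 by (rule max.boundedI)
    then have "alg_value m mt p r1 r2 h l s1 s2 \<le> 1 - (k / m) * g s1"
      using alg_range(3)[OF r, of m mt p h l s1 s2] unfolding x1_def by linarith
    moreover have "(k / e^2) * (real s2 - l * p)^2 \<ge> 0" using k0 by simp
    ultimately show ?thesis by linarith
  next
    case False
    then have "real s2 > real l - m" by linarith
    then have "real s2 - l * p > q * l - m" unfolding q_def by (simp add: algebra_simps)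
    moreover have "q * l - m \<ge> e"
    proof -
      have a: "q * m * m \<ge> 2 * m" using mult_right_mono[OF qm, of "real m"] unfolding q_def by simp
      have "q * l - m - e = (q * m * m - 2 * m) / 2" unfolding e_def l_def by (simp add: power2_eq_square field_simps)
      then show ?thesis using a by simp
    qed
    ultimately have "real s2 - l * p \<ge> e" by linarith
    then have "e^2 \<le> (real s2 - l * p)^2" using e0 by (intro power_mono) auto
    then have "1 \<le> (real s2 - l * p)^2 / e^2" using e0 by simp
    then have "k * 1 \<le> k * ((real s2 - l * p)^2 / e^2)" using k0 by (intro mult_left_mono) auto
    moreover have "(k / m) * g s1 \<le> k"
    proof -
      have "g s1 / m \<le> 1" using gm m by simp
      then have "k * (g s1 / m) \<le> k * 1" using k0 by (intro mult_left_mono) auto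
      then show ?thesis by simp
    qed
    moreover have "1 - alg_value m mt p r1 r2 h l s1 s2 \<ge> 0" using alg_range(2)[OF r] by simp
    ultimately show ?thesis by simp
  qed
  have "measure_pmf.expectation Q (\<lambda>s. (k / m) * g (fst s) - (k / e^2) * (real (snd s) - l * p)^2)
      \<le> measure_pmf.expectation Q (\<lambda>s. 1 - alg_value m mt p r1 r2 h l (fst s) (snd s))"
    using pt I by (intro integral_mono) auto
  also have "\<dots> = 1 - measure_pmf.expectation Q (\<lambda>s. alg_value m mt p r1 r2 h l (fst s) (snd s))"
    using I by (simp add: Bochner_Integration.integral_diff prob_space.prob_space measure_pmf.prob_space_axioms)
  finally have 1: "measure_pmf.expectation Q (\<lambda>s. alg_value m mt p r1 r2 h l (fst s) (snd s))
      \<le> 1 - measure_pmf.expectation Q (\<lambda>s. (k / m) * g (fst s) - (k / e^2) * (real (snd s) - l * p)^2)"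
    by linarith
  have "measure_pmf.expectation Q (\<lambda>s. (k / m) * g (fst s) - (k / e^2) * (real (snd s) - l * p)^2)
      = measure_pmf.expectation Q (\<lambda>s. (k / m) * g (fst s)) - measure_pmf.expectation Q (\<lambda>s. (k / e^2) * (real (snd s) - l * p)^2)"
    using I by (simp add: Bochner_Integration.integral_diff)
  also have "measure_pmf.expectation Q (\<lambda>s. (k / m) * g (fst s)) = measure_pmf.expectation (binomial_pmf h p) (\<lambda>s. (k / m) * g s)"
    unfolding Q_def by (rule expectation_pair_pmf_fst)
  also have "\<dots> = (k / m) * bS p h g" by (simp only: bS_expect[OF pp] bS_cmult)
  also have "measure_pmf.expectation Q (\<lambda>s. (k / e^2) * (real (snd s) - l * p)^2)
      = measure_pmf.expectation (binomial_pmf l p) (\<lambda>s. (k / e^2) * (real s - l * p)^2)"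
    unfolding Q_def by (rule expectation_pair_pmf_snd)
  also have "\<dots> = (k / e^2) * (l * p * (1 - p))" by (simp only: bS_expect[OF pp] bS_cmult bS_m2)
  also have "(k / e^2) * (l * p * (1 - p)) = k * (4 * p / ((1 - p) * m^2))"
  proof -
    have "(k / e^2) * (l * p * q) = k * (4 * p / (q * m^2))"
      unfolding e_def l_def using m q by (simp add: field_simps power2_eq_square)
    then show ?thesis by (simp add: q_def)
  qed
  finally have 2: "measure_pmf.expectation Q (\<lambda>s. (k / m) * g (fst s) - (k / e^2) * (real (snd s) - l * p)^2)
      = (k / m) * bS p h g - k * (4 * p / ((1 - p) * m^2))" .
  have "bS p h g \<ge> sqrt (h * p * (1 - p)) / (4 * p)" unfolding g_def by (rule G_bound[OF p hV])
  then have "(k / m) * bS p h g \<ge> (k / m) * (sqrt (h * p * (1 - p)) / (4 * p))" using k0 m by (intro mult_left_mono) auto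
  moreover have "k * (sqrt (h * p * (1 - p)) / (4 * p)) / m = (k / m) * (sqrt (h * p * (1 - p)) / (4 * p))" by simp
  ultimately show ?thesis using 1 2 unfolding Q_def l_def by linarith
qed


lemma E_alg_nonneg:
  assumes r: "0 < r2" "r2 < r1" "r1 < 1"
  shows "measure_pmf.expectation (pair_pmf (binomial_pmf h p) (binomial_pmf l p))
            (\<lambda>s. alg_value m mt p r1 r2 h l (fst s) (snd s)) \<ge> 0"
  using alg_range(1)[OF r] by (intro Bochner_Integration.integral_nonneg) auto

lemma comp_ratio_le:
  assumes r: "0 < r2" "r2 < r1" "r1 < 1"
  shows "comp_ratio m mt p r1 r2 \<le> measure_pmf.expectation (pair_pmf (binomial_pmf h p) (binomial_pmf l p))
            (\<lambda>s. alg_value m mt p r1 r2 h l (fst s) (snd s))"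
proof -
  have "bdd_below ((\<lambda>hl. measure_pmf.expectation (pair_pmf (binomial_pmf (fst hl) p) (binomial_pmf (snd hl) p))
          (\<lambda>s. alg_value m mt p r1 r2 (fst hl) (snd hl) (fst s) (snd s))) ` UNIV)"
    using E_alg_nonneg[OF r] by (intro bdd_belowI[of _ 0]) auto
  from cINF_lower[OF this, of "(h, l)"] show ?thesis unfolding comp_ratio_def by simp
qed

lemma comp_ratio_ge:
  assumes r: "0 < r2" "r2 < r1" "r1 < 1" and p: "0 < p" "p < 1" and m: "m > 0"
  defines "c \<equiv> (r1 - r2)^2 / 2" and "C \<equiv> 2 + 2 * r1 / r2"
  defines "K1 \<equiv> (1 + 1 / p) * sqrt m + 2 / (min p (1 - p))^2"
  defines "K2 \<equiv> 2 / (c * p) + 4 * (1 - p) / p"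
  shows "comp_ratio m mt p r1 r2 \<ge> 1 - (C * (2 * K1 + 2) / m + 2 * C * K2 / m + 2 * exp (- c * real (mt div 2)))"
  unfolding comp_ratio_def
proof (rule cINF_greatest)
  fix hl :: "nat \<times> nat"
  show "1 - (C * (2 * K1 + 2) / m + 2 * C * K2 / m + 2 * exp (- c * real (mt div 2)))
     \<le> measure_pmf.expectation (pair_pmf (binomial_pmf (fst hl) p) (binomial_pmf (snd hl) p))
            (\<lambda>s. alg_value m mt p r1 r2 (fst hl) (snd hl) (fst s) (snd s))"
    using E_upper[OF r p m, of mt "fst hl" "snd hl"] unfolding c_def C_def K1_def K2_def by simp
qed simp

lemma exp_neg_le_inv: fixes x :: real assumes "x > 0" shows "exp (- x) \<le> 1 / x"
proof -
  have "x \<le> exp x" using exp_ge_add_one_self[of x] by linarith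
  then show ?thesis using assms by (simp add: exp_minus field_simps)
qed


lemma ev_real_ge: "\<forall>\<^sub>F m in at_top. X \<le> real (m :: nat)"
  using filterlim_real_sequentially unfolding filterlim_at_top by auto

lemma E_alg_le1:
  assumes r: "0 < r2" "r2 < r1" "r1 < 1" and pp: "p \<in> {0..1}"
  shows "measure_pmf.expectation (pair_pmf (binomial_pmf h p) (binomial_pmf l p))
            (\<lambda>s. alg_value m mt p r1 r2 h l (fst s) (snd s)) \<le> 1"
proof -
  have "measure_pmf.expectation (pair_pmf (binomial_pmf h p) (binomial_pmf l p))
            (\<lambda>s. alg_value m mt p r1 r2 h l (fst s) (snd s))
       \<le> measure_pmf.expectation (pair_pmf (binomial_pmf h p) (binomial_pmf l p)) (\<lambda>s. 1)"
    using alg_range(2)[OF r] pair_bin_integrable[OF pp] by (intro integral_mono) auto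
  then show ?thesis by simp
qed

lemma B_bound:
  fixes m mt :: nat and c C K2 k0 p :: real
  assumes m: "real m \<ge> 4" and mt: "real mt \<ge> 3 * sqrt m" and c: "c > 0" and C: "C \<ge> 0"
    and K2: "K2 \<ge> 0" and k0: "k0 \<ge> 0" and p: "p > 0"
  shows "C * (2 * ((1 + 1 / p) * sqrt m + k0) + 2) / m + 2 * C * K2 / m + 2 * exp (- c * real (mt div 2))
     \<le> (2 * C * (1 + 1 / p) + C * (2 * k0 + 2) + 2 * C * K2 + 2 / c) / sqrt m"
proof -
  define s where "s = sqrt m"
  have s2: "s \<ge> 2" unfolding s_def using m real_sqrt_le_mono[of 4 "real m"] by simp
  have ms: "real m = s * s" unfolding s_def by simp
  have inv: "1 / real m \<le> 1 / s" unfolding ms using s2 by (simp add: field_simps)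
  have t1: "C * (2 * ((1 + 1 / p) * s + k0) + 2) / m = 2 * C * (1 + 1 / p) / s + C * (2 * k0 + 2) / m"
    unfolding ms using s2 by (simp add: field_simps)
  have t2: "C * (2 * k0 + 2) / m \<le> C * (2 * k0 + 2) / s"
    using inv C k0 mult_left_mono[OF inv, of "C * (2 * k0 + 2)"] by simp
  have t3: "2 * C * K2 / m \<le> 2 * C * K2 / s"
    using inv C K2 mult_left_mono[OF inv, of "2 * C * K2"] by simp
  have Mge: "real (mt div 2) \<ge> s"
  proof -
    obtain M where M: "M = mt div 2" by simp
    have "mt \<le> 2 * M + 1" unfolding M by presburger
    then have "real mt \<le> 2 * real M + 1" by linarith
    then have "real M \<ge> (real mt - 1) / 2" by (simp add: field_simps)
    then have "real (mt div 2) \<ge> (real mt - 1) / 2" unfolding M .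
    moreover have "(real mt - 1) / 2 \<ge> s" using mt s2 unfolding s_def by (simp add: field_simps)
    ultimately show ?thesis by linarith
  qed
  have "exp (- c * real (mt div 2)) \<le> 1 / (c * real (mt div 2))"
    using exp_neg_le_inv[of "c * real (mt div 2)"] c Mge s2 by simp
  also have "\<dots> \<le> 1 / (c * s)" using c s2 Mge by (intro divide_left_mono mult_left_mono mult_pos_pos) auto
  finally have t4: "2 * exp (- c * real (mt div 2)) \<le> 2 / c / s" by simp
  have "C * (2 * ((1 + 1 / p) * sqrt m + k0) + 2) / m + 2 * C * K2 / m + 2 * exp (- c * real (mt div 2))
     \<le> 2 * C * (1 + 1 / p) / s + C * (2 * k0 + 2) / s + 2 * C * K2 / s + 2 / c / s"
    using t1 t2 t3 t4 unfolding s_def by linarith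
  also have "\<dots> = (2 * C * (1 + 1 / p) + C * (2 * k0 + 2) + 2 * C * K2 + 2 / c) / s"
    by (simp add: add_divide_distrib)
  finally show ?thesis unfolding s_def .
qed


theorem proposition3:
  fixes p r1 r2 :: real and mt :: "nat \<Rightarrow> nat"
  assumes "0 < p" "p < 1" "0 < r2" "r2 < r1" "r1 < 1"
    and "(\<lambda>m. real (mt m)) \<in> \<omega>(\<lambda>m. sqrt (real m))"
  shows "(\<lambda>m. 1 - comp_ratio m (mt m) p r1 r2) \<in> \<Theta>(\<lambda>m. 1 / (p * sqrt (real m)))"
proof -
  have r: "0 < r2" "r2 < r1" "r1 < 1" using assms by auto
  have p: "0 < p" "p < 1" using assms by auto
  have pp: "p \<in> {0..1}" using p by auto
  define q where "q = 1 - p"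
  have q: "0 < q" "q < 1" unfolding q_def using p by auto
  define c where "c = (r1 - r2)^2 / 2"
  define C where "C = 2 + 2 * r1 / r2"
  define k0 where "k0 = 2 / (min p (1 - p))^2"
  define K2 where "K2 = 2 / (c * p) + 4 * (1 - p) / p"
  define Kc where "Kc = 2 * C * (1 + 1 / p) + C * (2 * k0 + 2) + 2 * C * K2 + 2 / c"
  define k where "k = (r1 - r2) / r1"
  define A where "A = k * sqrt (p^2 * q / 2) / (4 * p)"
  have c0: "c > 0" unfolding c_def using r by simp
  have C0: "C \<ge> 0" unfolding C_def using r by simp
  have k00: "k0 \<ge> 0" unfolding k0_def by simp
  have K20: "K2 \<ge> 0" unfolding K2_def using c0 p by simp
  have Kc0: "Kc \<ge> 0" unfolding Kc_def using C0 k00 K20 c0 p by simp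
  have k_pos: "k > 0" unfolding k_def using r by simp
  have A0: "A > 0" unfolding A_def using k_pos p q by simp
  define CR where "CR m = comp_ratio m (mt m) p r1 r2" for m
  have CR1: "CR m \<le> 1" for m
    using comp_ratio_le[OF r, of m "mt m" p 0 0] E_alg_le1[OF r pp, of 0 0 m "mt m"] unfolding CR_def by simp
  have ev_mt: "\<forall>\<^sub>F m in at_top. norm (real (mt m)) \<ge> 3 * norm (sqrt (real m))"
    using assms(6) by (rule smallomegaD)
  have up: "\<forall>\<^sub>F m in at_top. norm (1 - CR m) \<le> (Kc * p) * norm (1 / (p * sqrt (real m)))"
    using ev_mt ev_real_ge[of 4]
  proof eventually_elim
    case (elim m)
    have m4: "real m \<ge> 4" using elim by simp
    have m0: "m > 0" using m4 by simp
    have mtm: "real (mt m) \<ge> 3 * sqrt (real m)" using elim by simp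
    have "1 - CR m \<le> C * (2 * ((1 + 1 / p) * sqrt m + k0) + 2) / m + 2 * C * K2 / m + 2 * exp (- c * real (mt m div 2))"
      using comp_ratio_ge[OF r p m0, of "mt m"] unfolding CR_def c_def C_def k0_def K2_def by simp
    also have "\<dots> \<le> Kc / sqrt m" unfolding Kc_def by (rule B_bound[OF m4 mtm c0 C0 K20 k00 p(1)])
    also have "\<dots> = (Kc * p) * (1 / (p * sqrt (real m)))" using p by simp
    finally have "1 - CR m \<le> (Kc * p) * (1 / (p * sqrt (real m)))" .
    moreover have "1 - CR m \<ge> 0" using CR1[of m] by simp
    moreover have "1 / (p * sqrt (real m)) \<ge> 0" using p by simp
    ultimately show ?case by simp
  qed
  define N where "N = max 4 (max (2 / p) (max (2 / (p^2 * q)) (max (2 / q) (8 * k * p / (A * q)))))"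
  have low: "\<forall>\<^sub>F m in at_top. (A * p / 2) * norm (1 / (p * sqrt (real m))) \<le> norm (1 - CR m)"
    using ev_real_ge[of N]
  proof eventually_elim
    case (elim m)
    have mN: "real m \<ge> N" using elim .
    have m4: "real m \<ge> 4" using mN unfolding N_def by linarith
    have m0: "m > 0" using m4 by simp
    have pm2: "p * m \<ge> 2" using mN p unfolding N_def by (simp add: field_simps)
    have pqm: "p^2 * q * m \<ge> 2" using mN p q unfolding N_def by (simp add: field_simps)
    have qm: "(1 - p) * m \<ge> 2" using mN q unfolding N_def q_def by (simp add: field_simps)
    have Aqm: "A * q * m \<ge> 8 * k * p" using mN A0 q unfolding N_def by (simp add: field_simps)
    define h where "h = nat \<lfloor>p * m\<rfloor>"
    have fl0: "\<lfloor>p * m\<rfloor> \<ge> 0" using p by simp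
    have hr: "real h = of_int \<lfloor>p * m\<rfloor>" unfolding h_def using fl0 by simp
    have h1: "real h \<le> p * m" unfolding hr by (rule of_int_floor_le)
    have "p * m - 1 < of_int \<lfloor>p * m\<rfloor>" by (rule real_of_int_floor_gt_diff_one)
    then have h2: "real h \<ge> p * m / 2" unfolding hr using pm2 by linarith
    have "real h * p * q \<ge> (p * m / 2) * p * q" using h2 p q by (intro mult_right_mono) auto
    then have hpq: "real h * p * q \<ge> p^2 * q * m / 2" by (simp add: power2_eq_square algebra_simps)
    then have hV: "h * p * (1 - p) \<ge> 1" using pqm unfolding q_def by linarith
    have EL: "measure_pmf.expectation (pair_pmf (binomial_pmf h p) (binomial_pmf (m^2) p))
            (\<lambda>s. alg_value m (mt m) p r1 r2 h (m^2) (fst s) (snd s))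
         \<le> 1 - k * (sqrt (h * p * (1 - p)) / (4 * p)) / m + k * (4 * p / ((1 - p) * m^2))"
      unfolding k_def by (rule E_lower[OF r p m0 h1 hV qm])
    have "CR m \<le> measure_pmf.expectation (pair_pmf (binomial_pmf h p) (binomial_pmf (m^2) p))
            (\<lambda>s. alg_value m (mt m) p r1 r2 h (m^2) (fst s) (snd s))"
      unfolding CR_def by (rule comp_ratio_le[OF r])
    with EL have 1: "1 - CR m \<ge> k * (sqrt (h * p * (1 - p)) / (4 * p)) / m - k * (4 * p / ((1 - p) * m^2))"
      by linarith
    have sm: "sqrt (real m) > 0" using m0 by simp
    have "sqrt (h * p * (1 - p)) \<ge> sqrt (p^2 * q / 2) * sqrt m"
    proof -
      have "sqrt (p^2 * q / 2) * sqrt m = sqrt (p^2 * q * m / 2)" by (simp add: real_sqrt_mult[symmetric])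
      also have "\<dots> \<le> sqrt (h * p * (1 - p))" using hpq unfolding q_def by (intro real_sqrt_le_mono) (simp add: algebra_simps)
      finally show ?thesis .
    qed
    then have "k * (sqrt (h * p * (1 - p)) / (4 * p)) / m \<ge> k * (sqrt (p^2 * q / 2) * sqrt m / (4 * p)) / m"
      using k_pos p m0 by (intro divide_right_mono mult_left_mono) auto
    also have "k * (sqrt (p^2 * q / 2) * sqrt m / (4 * p)) / m = A / sqrt m"
    proof -
      obtain t where t: "t = sqrt (real m)" by simp
      have mt2: "real m = t * t" unfolding t by simp
      have t0: "t > 0" using sm t by simp
      show ?thesis unfolding A_def mt2 t[symmetric] using t0 p by (simp add: field_simps)
    qed
    finally have 2: "k * (sqrt (h * p * (1 - p)) / (4 * p)) / m \<ge> A / sqrt m" .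
    have 3: "k * (4 * p / ((1 - p) * m^2)) \<le> (A / 2) / sqrt m"
    proof -
      have smm: "sqrt m \<le> m"
      proof -
        have s1: "sqrt (real m) \<ge> 1" using m4 by simp
        have "sqrt (real m) * 1 \<le> sqrt (real m) * sqrt (real m)" using s1 by (intro mult_left_mono) auto
        then show ?thesis by simp
      qed
      have "8 * k * p * sqrt m \<le> A * q * m * sqrt m" using Aqm sm by (intro mult_right_mono) auto
      also have "\<dots> \<le> A * q * m * m" using smm A0 q m0 by (intro mult_left_mono) auto
      finally have "8 * k * p * sqrt m \<le> A * q * m^2" by (simp add: power2_eq_square)
      then show ?thesis unfolding q_def using sm q m0 by (simp add: field_simps q_def)
    qed
    have "1 - CR m \<ge> (A / 2) / sqrt m" using 1 2 3 by linarith
    moreover have "(A * p / 2) * (1 / (p * sqrt (real m))) = (A / 2) / sqrt m" using p by simp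
    moreover have "1 / (p * sqrt (real m)) \<ge> 0" using p by simp
    ultimately show ?case by simp
  qed
  show ?thesis
    unfolding CR_def[symmetric]
  proof (rule bigthetaI')
    show "A * p / 2 > 0" using A0 p by simp
    have "Kc * p \<ge> 0" using Kc0 p by simp
    then show "Kc * p + 1 > 0" by linarith
    show "\<forall>\<^sub>F x in at_top. A * p / 2 * norm (1 / (p * sqrt (real x))) \<le> norm (1 - CR x) \<and>
        norm (1 - CR x) \<le> (Kc * p + 1) * norm (1 / (p * sqrt (real x)))"
      using up low
    proof eventually_elim
      case (elim x)
      have "(Kc * p) * norm (1 / (p * sqrt (real x))) \<le> (Kc * p + 1) * norm (1 / (p * sqrt (real x)))"
        by (intro mult_right_mono) auto
      then show ?case using elim by linarith
    qed
  qed
qed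


end
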